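(* Let $P\in\mathbb{C}[x,y]$ have no zeros in $\mathbb{R}\times\mathbb{H}$ and no factors in common with $\bar P$; let $M=\mathrm{Ord}(P(0,y))$ and normalize so the coefficient of $y^M$ in $P(0,y)$ is real. Let $A=\tfrac12(P+\bar P)$, $B=\tfrac1{2i}(P-\bar P)$, fix $t\in\mathbb{R}$, and let $y-a_j(x;t)=0$, $j=1,\dots,M$, be the $M$ smooth branches of $A+tB$ through $(0,0)$ (so $A+tB=u\prod_{j=1}^M(y-a_j(x;t))$ locally with $u$ a unit and $a_j(\cdot;t)\in\mathbb{R}\{x\}$). Let $m_j(t)=\mathrm{Ord}\,B(x,a_j(x;t))$ and $$F_k(x,y)=\frac{A(x,y)+tB(x,y)}{\prod_{j=1}^k(y-a_j(x;t))},\qquad k=1,\dots,M.$$ Then the classes of $x^iF_k(x,y)$, for $1\le k\le M$ and $0\le i<m_k(t)$, form a basis of $\mathbb{C}\{x,y\}/(P,\bar P)$. In particular $\dim\mathbb{C}\{x,y\}/(P,\bar P)=\sum_{j=1}^Mm_j(t)$.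
   Context: $\mathbb{H}=\{\operatorname{Im}z>0\}$, $\bar P(x,y)=\overline{P(\bar x,\bar y)}$. $\mathbb{C}\{x,y\}$ is the ring of convergent power series at the origin and $(P,\bar P)$ the ideal they generate; $\mathbb{R}\{x\}$ are real-coefficient convergent series in $x$; a unit is a series nonvanishing at the origin; Ord is order of vanishing at $0$. *)

theory Defs
  imports Complex_Main "HOL-Computational_Algebra.Polynomial_FPS"
begin

text \<open>A polynomial P(x,y) in C[x,y] is a complex poly poly: the outer variable is y,
  the coefficients are polynomials in x.
  A formal power series in x,y is a complex fps fps: fps_nth f j is the coefficient
  of y^j (a power series in x), fps_nth (fps_nth f j) i is the coefficient of x^i y^j.
  Thus fps_X :: complex fps fps is y and fps_const fps_X is x.\<close>

definition eval2 :: "complex poly poly \<Rightarrow> complex \<Rightarrow> complex \<Rightarrow> complex" where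
  "eval2 P x y = poly (map_poly (\<lambda>c. poly c x) P) y"

definition conj_poly2 :: "complex poly poly \<Rightarrow> complex poly poly" where
  "conj_poly2 P = map_poly (map_poly cnj) P"

definition ps_of_poly2 :: "complex poly poly \<Rightarrow> complex fps fps" where
  "ps_of_poly2 P = fps_of_poly (map_poly fps_of_poly P)"

definition conv_ps1 :: "complex fps \<Rightarrow> bool" where
  "conv_ps1 a \<longleftrightarrow> (\<exists>r>0. \<exists>K. \<forall>i. norm (fps_nth a i) * r ^ i \<le> K)"

definition real_ps1 :: "complex fps \<Rightarrow> bool" where
  "real_ps1 a \<longleftrightarrow> conv_ps1 a \<and> (\<forall>i. fps_nth a i \<in> \<real>)"

definition conv_ps2 :: "complex fps fps \<Rightarrow> bool" where
  "conv_ps2 f \<longleftrightarrow> (\<exists>r>0. \<exists>K. \<forall>i j. norm (fps_nth (fps_nth f j) i) * r ^ (i + j) \<le> K)"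

definition ps_ideal2 :: "complex fps fps \<Rightarrow> complex fps fps \<Rightarrow> complex fps fps set" where
  "ps_ideal2 f g = {h1 * f + h2 * g | h1 h2. conv_ps2 h1 \<and> conv_ps2 h2}"

definition quot_basis :: "complex fps fps set \<Rightarrow> 'i set \<Rightarrow> ('i \<Rightarrow> complex fps fps) \<Rightarrow> bool" where
  "quot_basis I S v \<longleftrightarrow> finite S \<and> (\<forall>s\<in>S. conv_ps2 (v s))
     \<and> (\<forall>c. (\<Sum>s\<in>S. fps_const (fps_const (c s)) * v s) \<in> I \<longrightarrow> (\<forall>s\<in>S. c s = 0))
     \<and> (\<forall>f. conv_ps2 f \<longrightarrow> (\<exists>c. f - (\<Sum>s\<in>S. fps_const (fps_const (c s)) * v s) \<in> I))"

end

theory Submission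
  imports Defs "HOL-Analysis.FPS_Convergence" "HOL-Computational_Algebra.Polynomial_Factorial"
    "HOL-Computational_Algebra.Field_as_Ring"
begin

definition bnd :: "'a::real_normed_vector fps \<Rightarrow> bool" where
  "bnd a \<longleftrightarrow> (\<exists>r>0. \<exists>K. \<forall>i. norm (fps_nth a i) * r ^ i \<le> K)"

lemma conv_ps1_bnd: "conv_ps1 a \<longleftrightarrow> bnd a"
  unfolding conv_ps1_def bnd_def by simp

lemma bnd_imp_radius:
  fixes a :: "'a::{banach, real_normed_div_algebra} fps"
  assumes "bnd a" shows "fps_conv_radius a > 0"
proof -
  obtain r K where r: "r > 0" and K: "\<And>i. norm (fps_nth a i) * r ^ i \<le> K"
    using assms unfolding bnd_def by blast
  have s: "summable (\<lambda>n. fps_nth a n * of_real (r/2) ^ n)"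
  proof (rule summable_comparison_test')
    show "summable (\<lambda>n. K * (1/2) ^ n)" by (intro summable_mult summable_geometric) auto
    fix n
    have "norm (fps_nth a n * of_real (r/2) ^ n) = (norm (fps_nth a n) * r ^ n) * (1/2)^n"
      using r by (simp add: norm_mult norm_power power_divide del: of_real_divide)
    also have "\<dots> \<le> K * (1/2)^n" by (intro mult_right_mono K) auto
    finally show "norm (fps_nth a n * of_real (r/2) ^ n) \<le> K * (1/2)^n" .
  qed
  have "conv_radius (fps_nth a) \<ge> norm (of_real (r/2) :: 'a)"
    by (rule conv_radius_geI[OF s])
  moreover have "norm (of_real (r/2) :: 'a) = r/2" using r by (simp add: norm_of_real del: of_real_divide)
  ultimately have "ereal (r/2) \<le> fps_conv_radius a" unfolding fps_conv_radius_def by metis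
  moreover have "0 < ereal (r/2)" using r by simp
  ultimately show ?thesis by (rule less_le_trans[rotated])
qed

lemma radius_imp_bnd:
  fixes a :: "'a::{banach, real_normed_div_algebra} fps"
  assumes "fps_conv_radius a > 0" shows "bnd a"
proof -
  obtain r :: real where r: "r > 0" "ereal r < fps_conv_radius a"
  proof (cases "fps_conv_radius a")
    case (real x) then show ?thesis using assms that[of "x/2"] by auto
  next
    case PInf then show ?thesis using that[of 1] by auto
  next
    case MInf then show ?thesis using assms by auto
  qed
  have "summable (\<lambda>n. norm (fps_nth a n * (of_real r :: 'a) ^ n))"
    by (rule abs_summable_in_conv_radius) (use r in \<open>auto simp: fps_conv_radius_def\<close>)
  then have "\<And>i. norm (fps_nth a i * (of_real r :: 'a) ^ i) \<le> (\<Sum>n. norm (fps_nth a n * (of_real r :: 'a) ^ n))"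
  proof -
    fix i
    assume s: "summable (\<lambda>n. norm (fps_nth a n * (of_real r :: 'a) ^ n))"
    have "(\<Sum>n\<in>{i}. norm (fps_nth a n * (of_real r :: 'a) ^ n)) \<le> (\<Sum>n. norm (fps_nth a n * (of_real r :: 'a) ^ n))"
      by (rule sum_le_suminf[OF s]) auto
    then show "norm (fps_nth a i * (of_real r :: 'a) ^ i) \<le> (\<Sum>n. norm (fps_nth a n * (of_real r :: 'a) ^ n))" by simp
  qed
  then show ?thesis unfolding bnd_def using r
    by (intro exI[of _ r]) (auto simp: norm_mult norm_power)
qed

lemma bnd_iff_radius:
  fixes a :: "'a::{banach, real_normed_div_algebra} fps"
  shows "bnd a \<longleftrightarrow> fps_conv_radius a > 0"
  using bnd_imp_radius radius_imp_bnd by blast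


lemma conv_ps1_iff: "conv_ps1 a \<longleftrightarrow> fps_conv_radius a > 0"
  by (simp add: conv_ps1_bnd bnd_iff_radius)

lemma conv_ps1_add [intro]: "conv_ps1 a \<Longrightarrow> conv_ps1 b \<Longrightarrow> conv_ps1 (a + b)"
  unfolding conv_ps1_iff using fps_conv_radius_add[of a b] by (auto simp: min_def split: if_splits)
lemma conv_ps1_diff [intro]: "conv_ps1 a \<Longrightarrow> conv_ps1 b \<Longrightarrow> conv_ps1 (a - b)"
  unfolding conv_ps1_iff using fps_conv_radius_diff[of a b] by (auto simp: min_def split: if_splits)
lemma conv_ps1_mult [intro]: "conv_ps1 a \<Longrightarrow> conv_ps1 b \<Longrightarrow> conv_ps1 (a * b)"
  unfolding conv_ps1_iff using fps_conv_radius_mult[of a b] by (auto simp: min_def split: if_splits)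
lemma conv_ps1_uminus [intro]: "conv_ps1 a \<Longrightarrow> conv_ps1 (- a)"
  unfolding conv_ps1_iff by simp
lemma conv_ps1_power [intro]: "conv_ps1 a \<Longrightarrow> conv_ps1 (a ^ n)"
  unfolding conv_ps1_iff using fps_conv_radius_power[of a n] by (auto)
lemma conv_ps1_const [intro, simp]: "conv_ps1 (fps_const c)"
  unfolding conv_ps1_iff by simp
lemma conv_ps1_0 [intro, simp]: "conv_ps1 0"
  unfolding conv_ps1_iff by simp
lemma conv_ps1_1 [intro, simp]: "conv_ps1 1"
  unfolding conv_ps1_iff by simp
lemma conv_ps1_X [intro, simp]: "conv_ps1 fps_X"
  unfolding conv_ps1_iff by simp
lemma conv_ps1_Xp [intro, simp]: "conv_ps1 (fps_X ^ n)"
  unfolding conv_ps1_iff by simp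
lemma conv_ps1_shift [intro]: "conv_ps1 a \<Longrightarrow> conv_ps1 (fps_shift n a)"
  unfolding conv_ps1_iff by simp
lemma conv_ps1_of_poly [intro, simp]: "conv_ps1 (fps_of_poly p)"
  unfolding conv_ps1_iff by simp
lemma conv_ps1_inverse [intro]: "conv_ps1 a \<Longrightarrow> fps_nth a 0 \<noteq> 0 \<Longrightarrow> conv_ps1 (inverse a)"
  unfolding conv_ps1_iff by (rule fps_conv_radius_inverse_pos)
lemma conv_ps1_sum [intro]: "(\<And>i. i \<in> S \<Longrightarrow> conv_ps1 (f i)) \<Longrightarrow> conv_ps1 (\<Sum>i\<in>S. f i)"
  by (induction S rule: infinite_finite_induct) auto
lemma conv_ps1_prod [intro]: "(\<And>i. i \<in> S \<Longrightarrow> conv_ps1 (f i)) \<Longrightarrow> conv_ps1 (\<Prod>i\<in>S. f i)"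
  by (induction S rule: infinite_finite_induct) auto

definition cp :: "complex fps poly \<Rightarrow> bool" where
  "cp p \<longleftrightarrow> (\<forall>i. conv_ps1 (coeff p i))"

lemma cp_0 [simp, intro]: "cp 0" by (simp add: cp_def)
lemma cp_1 [simp, intro]: "cp 1" by (simp add: cp_def coeff_1)
lemma cp_const [intro]: "conv_ps1 c \<Longrightarrow> cp [:c:]" by (auto simp: cp_def coeff_pCons split: nat.splits)
lemma cp_pCons [simp]: "cp (pCons a p) \<longleftrightarrow> conv_ps1 a \<and> cp p"
  by (auto simp: cp_def coeff_pCons split: nat.splits)
lemma cp_add [intro]: "cp p \<Longrightarrow> cp q \<Longrightarrow> cp (p + q)" by (auto simp: cp_def)
lemma cp_diff [intro]: "cp p \<Longrightarrow> cp q \<Longrightarrow> cp (p - q)" by (auto simp: cp_def)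
lemma cp_uminus [intro]: "cp p \<Longrightarrow> cp (- p)" by (auto simp: cp_def)
lemma cp_smult [intro]: "conv_ps1 c \<Longrightarrow> cp p \<Longrightarrow> cp (smult c p)" by (auto simp: cp_def)
lemma cp_mult [intro]: "cp p \<Longrightarrow> cp q \<Longrightarrow> cp (p * q)"
  by (auto simp: cp_def coeff_mult)
lemma cp_power [intro]: "cp p \<Longrightarrow> cp (p ^ n)"
  by (induction n) auto
lemma cp_sum [intro]: "(\<And>i. i \<in> S \<Longrightarrow> cp (f i)) \<Longrightarrow> cp (\<Sum>i\<in>S. f i)"
  by (induction S rule: infinite_finite_induct) auto
lemma cp_prod [intro]: "(\<And>i. i \<in> S \<Longrightarrow> cp (f i)) \<Longrightarrow> cp (\<Prod>i\<in>S. f i)"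
  by (induction S rule: infinite_finite_induct) auto
lemma cp_lin [intro]: "conv_ps1 a \<Longrightarrow> cp [:- a, 1:]" by auto
lemma cp_map [intro, simp]: "cp (map_poly fps_of_poly p)"
  by (auto simp: cp_def coeff_map_poly)
lemma cp_poly [intro]: "cp p \<Longrightarrow> conv_ps1 a \<Longrightarrow> conv_ps1 (poly p a)"
  by (induction p) auto
lemma cp_synthetic_div [intro]: "cp p \<Longrightarrow> conv_ps1 a \<Longrightarrow> cp (synthetic_div p a)"
  by (induction p) auto

definition Wp :: "(nat \<Rightarrow> complex fps) \<Rightarrow> nat \<Rightarrow> nat \<Rightarrow> complex fps poly" where
  "Wp a k n = (\<Prod>j\<in>{Suc k..n}. [:- a j, 1:])"

definition idx :: "(nat \<Rightarrow> nat) \<Rightarrow> nat \<Rightarrow> (nat \<times> nat) set" where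
  "idx m n = {(k, i). k \<in> {1..n} \<and> i < m k}"

definition comb :: "(nat \<times> nat \<Rightarrow> complex) \<Rightarrow> (nat \<Rightarrow> nat) \<Rightarrow> (nat \<Rightarrow> complex fps) \<Rightarrow> nat \<Rightarrow> complex fps poly" where
  "comb c m a n = (\<Sum>(k, i)\<in>idx m n. smult (fps_const (c (k, i)) * fps_X ^ i) (Wp a k n))"

lemma Wp_Suc: "k \<le> n \<Longrightarrow> Wp a k (Suc n) = [:- a (Suc n), 1:] * Wp a k n"
  unfolding Wp_def by (subst prod.nat_ivl_Suc') (auto simp: mult.commute)

lemma Wp_same [simp]: "Wp a n n = 1"
  unfolding Wp_def by simp

lemma finite_idx [simp]: "finite (idx m n)"
proof -
  have "idx m n \<subseteq> {1..n} \<times> {..<Max (m ` {1..n})}"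
    unfolding idx_def by (auto intro!: less_le_trans[OF _ Max_ge])
  then show ?thesis by (rule finite_subset) auto
qed

lemma idx_Suc: "idx m (Suc n) = idx m n \<union> (\<lambda>i. (Suc n, i)) ` {..<m (Suc n)}"
  unfolding idx_def by (auto simp: image_iff le_Suc_eq)

lemma sum_const_poly: "(\<Sum>i\<in>S. [:f i:]) = [:\<Sum>i\<in>S. f i:]"
  by (induction S rule: infinite_finite_induct) auto

lemma comb_Suc:
  "comb c m a (Suc n) = [:- a (Suc n), 1:] * comb c m a n
      + [:\<Sum>i<m (Suc n). fps_const (c (Suc n, i)) * fps_X ^ i:]"
proof -
  have disj: "idx m n \<inter> (\<lambda>i. (Suc n, i)) ` {..<m (Suc n)} = {}"
    unfolding idx_def by auto
  have "comb c m a (Suc n) = (\<Sum>(k, i)\<in>idx m n. smult (fps_const (c (k, i)) * fps_X ^ i) (Wp a k (Suc n)))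
      + (\<Sum>(k, i)\<in>(\<lambda>i. (Suc n, i)) ` {..<m (Suc n)}. smult (fps_const (c (k, i)) * fps_X ^ i) (Wp a k (Suc n)))"
    unfolding comb_def idx_Suc by (rule sum.union_disjoint) (use disj in auto)
  also have "(\<Sum>(k, i)\<in>idx m n. smult (fps_const (c (k, i)) * fps_X ^ i) (Wp a k (Suc n)))
      = [:- a (Suc n), 1:] * comb c m a n"
    unfolding comb_def sum_distrib_left
  proof (rule sum.cong)
    fix x assume "x \<in> idx m n"
    then obtain k i where x: "x = (k, i)" "k \<le> n" unfolding idx_def by auto
    show "(case x of (k, i) \<Rightarrow> smult (fps_const (c (k, i)) * fps_X ^ i) (Wp a k (Suc n))) =
        [:- a (Suc n), 1:] * (case x of (k, i) \<Rightarrow> smult (fps_const (c (k, i)) * fps_X ^ i) (Wp a k n))"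
      unfolding x by (simp only: prod.case Wp_Suc[OF x(2)] mult_smult_right)
  qed simp
  also have "(\<Sum>(k, i)\<in>(\<lambda>i. (Suc n, i)) ` {..<m (Suc n)}. smult (fps_const (c (k, i)) * fps_X ^ i) (Wp a k (Suc n)))
      = (\<Sum>i<m (Suc n). [:fps_const (c (Suc n, i)) * fps_X ^ i:])"
    by (subst sum.reindex) (auto simp: inj_on_def)
  also have "\<dots> = [:\<Sum>i<m (Suc n). fps_const (c (Suc n, i)) * fps_X ^ i:]"
    by (rule sum_const_poly)
  finally show ?thesis .
qed

lemma comb_0 [simp]: "comb c m a 0 = 0"
  unfolding comb_def idx_def by simp

lemma Wp0_Suc: "Wp a 0 (Suc n) = [:- a (Suc n), 1:] * Wp a 0 n"
  by (simp add: Wp_Suc)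

lemma lin_nonzero [simp]: "[:- b, 1:] \<noteq> (0 :: 'a::comm_ring_1 poly)"
  by simp

lemma lin_dvd: fixes p :: "'a::comm_ring_1 poly"
  shows "p = [:- b, 1:] * synthetic_div p b + [:poly p b:]"
  using synthetic_div_correct'[of b p] by (simp add: algebra_simps)

lemma poly_lin_factor: fixes p :: "'a::comm_ring_1 poly"
  assumes "poly p b = 0" shows "p = [:- b, 1:] * synthetic_div p b"
  using lin_dvd[of p b] assms by simp

lemma trunc_sum_nth:
  "fps_nth (\<Sum>i<m. fps_const (c i) * fps_X ^ i) k = (if k < m then c k else (0::'a::comm_ring_1))"
proof -
  have "(\<Sum>i<m. c i * (if k = i then 1 else 0)) = (\<Sum>i<m. if k = i then c i else 0)"
    by (rule sum.cong) auto
  then show ?thesis unfolding fps_sum_nth by (simp add: fps_X_power_iff)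
qed

lemma fps_split_shift:
  fixes v :: "'a::comm_ring_1 fps"
  shows "v = (\<Sum>i<m. fps_const (fps_nth v i) * fps_X ^ i) + fps_X ^ m * fps_shift m v"
  by (rule fps_ext) (auto simp: trunc_sum_nth fps_X_power_mult_nth)


lemma subdegree_trunc_lt:
  fixes v :: "'a::comm_ring_1 fps"
  assumes "v \<noteq> 0" "\<And>k. k \<ge> m \<Longrightarrow> fps_nth v k = 0"
  shows "subdegree v < m"
  using assms nth_subdegree_nonzero[of v] not_less by blast

lemma indep_poly:
  fixes Bq :: "complex fps poly"
  assumes nz: "\<forall>j\<in>{1..n}. poly Bq (a j) \<noteq> 0"
    and md: "\<forall>j. m j = subdegree (poly Bq (a j))"
    and eq: "comb c m a n = \<alpha> * Wp a 0 n + \<beta> * Bq"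
  shows "\<forall>(k, i)\<in>idx m n. c (k, i) = 0"
  using nz eq
proof (induction n arbitrary: \<alpha> \<beta>)
  case 0 then show ?case by (simp add: idx_def)
next
  case (Suc n)
  define b where "b = a (Suc n)"
  define L where "L = [:- b, 1:]"
  define v where "v = (\<Sum>i<m (Suc n). fps_const (c (Suc n, i)) * fps_X ^ i)"
  have eq1: "L * comb c m a n + [:v:] = \<alpha> * (L * Wp a 0 n) + \<beta> * Bq"
    using Suc.prems(2) unfolding comb_Suc Wp0_Suc L_def b_def v_def .
  have "poly (L * comb c m a n + [:v:]) b = poly (\<alpha> * (L * Wp a 0 n) + \<beta> * Bq) b"
    using eq1 by simp
  then have ev: "v = poly \<beta> b * poly Bq b" by (simp add: L_def)
  have Bnz: "poly Bq b \<noteq> 0" using Suc.prems(1) b_def by auto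
  have mdef: "m (Suc n) = subdegree (poly Bq b)" using md b_def by simp
  have vhigh: "\<And>k. k \<ge> m (Suc n) \<Longrightarrow> fps_nth v k = 0"
    unfolding v_def trunc_sum_nth by simp
  have pb0: "poly \<beta> b = 0"
  proof (rule ccontr)
    assume h: "poly \<beta> b \<noteq> 0"
    then have "v \<noteq> 0" using ev Bnz by simp
    then have "subdegree v < m (Suc n)" using vhigh by (rule subdegree_trunc_lt)
    moreover have "subdegree v = subdegree (poly \<beta> b) + subdegree (poly Bq b)"
      using ev h Bnz by (simp add: subdegree_mult)
    ultimately show False using mdef by simp
  qed
  then have v0: "v = 0" using ev by simp
  have cS: "\<And>i. i < m (Suc n) \<Longrightarrow> c (Suc n, i) = 0"
  proof -
    fix i assume "i < m (Suc n)"
    then have "fps_nth v i = c (Suc n, i)" unfolding v_def trunc_sum_nth by simp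
    then show "c (Suc n, i) = 0" using v0 by simp
  qed
  define \<beta>' where "\<beta>' = synthetic_div \<beta> b"
  have bf: "\<beta> = L * \<beta>'" unfolding L_def \<beta>'_def by (rule poly_lin_factor[OF pb0])
  have "L * comb c m a n = L * (\<alpha> * Wp a 0 n + \<beta>' * Bq)"
    using eq1 v0 unfolding bf by (simp add: algebra_simps)
  moreover have "L \<noteq> 0" by (simp add: L_def)
  ultimately have "comb c m a n = \<alpha> * Wp a 0 n + \<beta>' * Bq"
    using mult_left_cancel by blast
  then have IH: "\<forall>(k, i)\<in>idx m n. c (k, i) = 0"
    using Suc.IH Suc.prems(1) by auto
  show ?case unfolding idx_Suc using IH cS by auto
qed


lemma shift_unit:
  fixes b :: "'a::idom fps"
  assumes "b \<noteq> 0"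
  shows "b = fps_X ^ subdegree b * fps_shift (subdegree b) b"
    and "fps_nth (fps_shift (subdegree b) b) 0 \<noteq> 0"
  using assms fps_shift_times_fps_X_power[of "subdegree b" b] by (simp_all add: mult.commute)

lemma span_poly:
  fixes Bq :: "complex fps poly"
  assumes hyp: "\<forall>j\<in>{1..n}. conv_ps1 (a j) \<and> poly Bq (a j) \<noteq> 0"
    and md: "\<forall>j. m j = subdegree (poly Bq (a j))"
    and cB: "cp Bq"
    and cg: "cp g"
  shows "\<exists>c \<alpha> \<beta>. cp \<alpha> \<and> cp \<beta> \<and> g = comb c m a n + \<alpha> * Wp a 0 n + \<beta> * Bq"
  using hyp cg
proof (induction n arbitrary: g)
  case 0
  show ?case by (rule exI[of _ "\<lambda>_. 0"], rule exI[of _ g], rule exI[of _ 0]) (use 0 in \<open>simp add: Wp_def\<close>)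
next
  case (Suc n)
  define b where "b = a (Suc n)"
  define L where "L = [:- b, 1:]"
  have cb: "conv_ps1 b" using Suc.prems(1) b_def by auto
  define v where "v = poly g b"
  have cv: "conv_ps1 v" unfolding v_def using Suc.prems(2) cb by auto
  define Bb where "Bb = poly Bq b"
  have Bnz: "Bb \<noteq> 0" using Suc.prems(1) b_def Bb_def by auto
  define mm where "mm = m (Suc n)"
  have mdef: "mm = subdegree Bb" using md b_def Bb_def mm_def by simp
  define e where "e = fps_shift mm Bb"
  have Be: "Bb = fps_X ^ mm * e" and e0: "fps_nth e 0 \<noteq> 0"
    using shift_unit[OF Bnz] unfolding mdef e_def by auto
  have ce: "conv_ps1 e" unfolding e_def Bb_def using cB cb by auto
  define h where "h = fps_shift mm v * inverse e"
  have ch: "conv_ps1 h" unfolding h_def using cv ce e0 by auto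
  define t where "t = (\<Sum>i<mm. fps_const (fps_nth v i) * fps_X ^ i)"
  have vt: "v = t + fps_X ^ mm * fps_shift mm v" unfolding t_def by (rule fps_split_shift)
  have ct: "conv_ps1 t" unfolding t_def by auto
  define g' where "g' = g - [:t:] - smult h Bq"
  have cg': "cp g'" unfolding g'_def using Suc.prems(2) ct ch cB by auto
  have "poly g' b = v - t - h * Bb" unfolding g'_def v_def Bb_def by simp
  also have "\<dots> = fps_X ^ mm * fps_shift mm v - fps_shift mm v * (inverse e * e) * fps_X ^ mm"
    unfolding h_def Be by (subst vt) (simp add: algebra_simps)
  also have "inverse e * e = 1" using e0 by (simp add: inverse_mult_eq_1)
  finally have pg': "poly g' b = 0" by (simp add: algebra_simps)
  define g'' where "g'' = synthetic_div g' b"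
  have g'f: "g' = L * g''" unfolding L_def g''_def by (rule poly_lin_factor[OF pg'])
  have cg'': "cp g''" unfolding g''_def using cg' cb by auto
  obtain c' \<alpha>' \<beta>' where c': "cp \<alpha>'" "cp \<beta>'" "g'' = comb c' m a n + \<alpha>' * Wp a 0 n + \<beta>' * Bq"
    using Suc.IH[OF _ cg''] Suc.prems(1) by auto
  define c where "c = (\<lambda>(k, i). if k = Suc n then fps_nth v i else c' (k, i))"
  have combeq: "comb c m a n = comb c' m a n"
    unfolding comb_def by (rule sum.cong) (auto simp: c_def idx_def)
  have tc: "t = (\<Sum>i<m (Suc n). fps_const (c (Suc n, i)) * fps_X ^ i)"
    unfolding t_def mm_def c_def by simp
  have "g = g' + [:t:] + smult h Bq" unfolding g'_def by simp
  also have "\<dots> = L * (comb c m a n + \<alpha>' * Wp a 0 n + \<beta>' * Bq) + [:t:] + [:h:] * Bq"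
    unfolding g'f c'(3) combeq by simp
  also have "\<dots> = comb c m a (Suc n) + \<alpha>' * Wp a 0 (Suc n) + (L * \<beta>' + [:h:]) * Bq"
    unfolding comb_Suc Wp0_Suc tc L_def b_def by (simp add: algebra_simps)
  finally have "g = comb c m a (Suc n) + \<alpha>' * Wp a 0 (Suc n) + (L * \<beta>' + [:h:]) * Bq" .
  moreover have "cp (L * \<beta>' + [:h:])" unfolding L_def by (intro cp_add cp_mult cp_lin cp_const c'(2) cb ch)
  ultimately show ?case using c'(1) by blast
qed


definition Jc :: "complex fps poly \<Rightarrow> complex fps poly \<Rightarrow> complex fps poly set" where
  "Jc W Bq = {p. \<exists>\<alpha> \<beta>. cp \<alpha> \<and> cp \<beta> \<and> p = \<alpha> * W + \<beta> * Bq}"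

lemma Jc_mult: "p \<in> Jc W Bq \<Longrightarrow> cp q \<Longrightarrow> q * p \<in> Jc W Bq"
proof -
  assume "p \<in> Jc W Bq" "cp q"
  then obtain \<alpha> \<beta> where "cp \<alpha>" "cp \<beta>" "p = \<alpha> * W + \<beta> * Bq"
    unfolding Jc_def by blast
  then show ?thesis unfolding Jc_def using \<open>cp q\<close>
    by (intro CollectI exI[of _ "q * \<alpha>"] exI[of _ "q * \<beta>"]) (auto simp: algebra_simps)
qed

lemma Jc_add: "p \<in> Jc W Bq \<Longrightarrow> p' \<in> Jc W Bq \<Longrightarrow> p + p' \<in> Jc W Bq"
proof -
  assume "p \<in> Jc W Bq" "p' \<in> Jc W Bq"
  then obtain \<alpha> \<beta> \<alpha>' \<beta>' where "cp \<alpha>" "cp \<beta>" "p = \<alpha> * W + \<beta> * Bq" "cp \<alpha>'" "cp \<beta>'" "p' = \<alpha>' * W + \<beta>' * Bq"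
    unfolding Jc_def by blast
  then show ?thesis unfolding Jc_def
    by (intro CollectI exI[of _ "\<alpha> + \<alpha>'"] exI[of _ "\<beta> + \<beta>'"]) (auto simp: algebra_simps)
qed

lemma cp_Wp [intro]: "\<forall>j\<in>{Suc k..n}. conv_ps1 (a j) \<Longrightarrow> cp (Wp a k n)"
  unfolding Wp_def by (intro cp_prod cp_lin) auto

lemma xpow_poly:
  fixes Bq :: "complex fps poly"
  assumes hyp: "\<forall>j\<in>{1..n}. conv_ps1 (a j) \<and> poly Bq (a j) \<noteq> 0"
    and md: "\<forall>j. m j = subdegree (poly Bq (a j))"
    and cB: "cp Bq"
  shows "[:fps_X ^ (\<Sum>j\<in>{1..n}. m j):] \<in> Jc (Wp a 0 n) Bq"
  using hyp
proof (induction n)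
  case 0 show ?case unfolding Jc_def by (intro CollectI exI[of _ 1] exI[of _ 0]) (simp add: Wp_def)
next
  case (Suc n)
  define b where "b = a (Suc n)"
  define L where "L = [:- b, 1:]"
  have cb: "conv_ps1 b" using Suc.prems(1) b_def by auto
  define Bb where "Bb = poly Bq b"
  have Bnz: "Bb \<noteq> 0" using Suc.prems(1) b_def Bb_def by auto
  define mm where "mm = m (Suc n)"
  have mdef: "mm = subdegree Bb" using md b_def Bb_def mm_def by simp
  define e where "e = fps_shift mm Bb"
  have Be: "Bb = fps_X ^ mm * e" and e0: "fps_nth e 0 \<noteq> 0"
    using shift_unit[OF Bnz] unfolding mdef e_def by auto
  have ce: "conv_ps1 e" unfolding e_def Bb_def using cB cb by auto
  define ie where "ie = inverse e"
  have cie: "conv_ps1 ie" unfolding ie_def using ce e0 by auto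
  have iee: "ie * e = 1" unfolding ie_def using e0 by (simp add: inverse_mult_eq_1)
  define q where "q = synthetic_div Bq b"
  have cq: "cp q" unfolding q_def using cB cb by auto
  have Bdec: "Bq = L * q + [:Bb:]" unfolding L_def q_def Bb_def by (rule lin_dvd)
  have xm: "[:fps_X ^ mm:] = [:ie:] * Bq - [:ie:] * q * L"
  proof -
    have "[:ie:] * Bq - [:ie:] * q * L = [:ie:] * [:Bb:]" by (subst Bdec) (simp add: algebra_simps)
    also have "\<dots> = [:fps_X ^ mm:]" unfolding Be using iee by (simp add: algebra_simps)
    finally show ?thesis by simp
  qed
  obtain \<alpha> \<beta> where ab: "cp \<alpha>" "cp \<beta>" "[:fps_X ^ (\<Sum>j\<in>{1..n}. m j):] = \<alpha> * Wp a 0 n + \<beta> * Bq"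
    using Suc.IH Suc.prems unfolding Jc_def by auto
  have cW: "cp (Wp a 0 n)" using Suc.prems by (intro cp_Wp) auto
  have "[:fps_X ^ (\<Sum>j\<in>{1..Suc n}. m j):] = [:fps_X ^ (\<Sum>j\<in>{1..n}. m j):] * [:fps_X ^ mm:]"
    by (simp add: mm_def power_add mult.commute)
  also have "\<dots> = (- \<alpha> * [:ie:] * q) * Wp a 0 (Suc n)
      + (\<alpha> * Wp a 0 n * [:ie:] + \<beta> * ([:ie:] * Bq - [:ie:] * q * L)) * Bq"
    unfolding ab(3) xm Wp0_Suc L_def b_def by (simp add: algebra_simps)
  finally show ?case unfolding Jc_def
    by (intro CollectI exI[of _ "- \<alpha> * [:ie:] * q"] exI[of _ "\<alpha> * Wp a 0 n * [:ie:] + \<beta> * ([:ie:] * Bq - [:ie:] * q * L)"])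
       (use ab cie cq cW cB cb in \<open>auto simp: L_def intro!: cp_mult cp_add cp_diff cp_uminus cp_lin cp_const\<close>)
qed

lemma ypow_aux:
  assumes "\<forall>j\<in>{1..n}. conv_ps1 (a j) \<and> fps_nth (a j) 0 = 0"
  shows "\<exists>R. cp R \<and> [:0, 1:] ^ n = Wp a 0 n + smult fps_X R"
  using assms
proof (induction n)
  case 0 show ?case by (intro exI[of _ 0]) (simp add: Wp_def)
next
  case (Suc n)
  obtain R where R: "cp R" "[:0, 1:] ^ n = Wp a 0 n + smult fps_X R" using Suc by auto
  define b where "b = a (Suc n)"
  have cb: "conv_ps1 b" and b0: "fps_nth b 0 = 0" using Suc.prems b_def by auto
  have bX: "b = fps_X * fps_shift 1 b"
    by (rule fps_ext) (use b0 in \<open>simp add: fps_X_mult_nth\<close>)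
  have cW: "cp (Wp a 0 n)" using Suc.prems by (intro cp_Wp) auto
  have "[:0, 1:] ^ Suc n = [:0, 1:] * (Wp a 0 n + smult fps_X R)" using R by simp
  also have "\<dots> = Wp a 0 (Suc n) + [:b:] * Wp a 0 n + [:0, 1:] * smult fps_X R"
    unfolding Wp0_Suc b_def by (simp add: algebra_simps)
  also have "[:b:] * Wp a 0 n = smult fps_X ([:fps_shift 1 b:] * Wp a 0 n)"
    by (subst bX) simp
  finally have "[:0, 1:] ^ Suc n = Wp a 0 (Suc n) + smult fps_X ([:fps_shift 1 b:] * Wp a 0 n + [:0, 1:] * R)"
    by (simp add: algebra_simps smult_add_right)
  moreover have "cp ([:fps_shift 1 b:] * Wp a 0 n + [:0, 1:] * R)"
    using cW R(1) cb by (intro cp_add cp_mult cp_const) auto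
  ultimately show ?case by blast
qed

lemma binom_aux:
  fixes W R :: "complex fps poly"
  assumes "cp W" "cp R"
  shows "\<exists>Q. cp Q \<and> (W + smult fps_X R) ^ N = W * Q + smult (fps_X ^ N) (R ^ N)"
proof (induction N)
  case 0 show ?case by (intro exI[of _ 0]) simp
next
  case (Suc N)
  then obtain Q where Q: "cp Q" "(W + smult fps_X R) ^ N = W * Q + smult (fps_X ^ N) (R ^ N)" by auto
  have "(W + smult fps_X R) ^ Suc N = (W + smult fps_X R) * (W * Q + smult (fps_X ^ N) (R ^ N))"
    using Q by simp
  also have "\<dots> = W * (Q * (W + smult fps_X R) + smult (fps_X ^ N) (R ^ N)) + smult (fps_X ^ Suc N) (R ^ Suc N)"
    by (simp add: algebra_simps smult_add_right)
  finally show ?case using Q(1) assms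
    by (intro exI[of _ "Q * (W + smult fps_X R) + smult (fps_X ^ N) (R ^ N)"] conjI)
       (auto intro!: cp_add cp_mult cp_smult cp_power)
qed


lemma XY_in_J:
  fixes Bq :: "complex fps poly"
  assumes hyp: "\<forall>j\<in>{1..n}. conv_ps1 (a j) \<and> fps_nth (a j) 0 = 0 \<and> poly Bq (a j) \<noteq> 0"
    and md: "\<forall>j. m j = subdegree (poly Bq (a j))"
    and cB: "cp Bq"
  shows "\<exists>K. [:fps_X ^ K:] \<in> Jc (Wp a 0 n) Bq \<and> [:0, 1:] ^ K \<in> Jc (Wp a 0 n) Bq"
proof -
  define N where "N = (\<Sum>j\<in>{1..n}. m j)"
  define W where "W = Wp a 0 n"
  have xN: "[:fps_X ^ N:] \<in> Jc W Bq" unfolding N_def W_def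
    by (rule xpow_poly) (use hyp md cB in auto)
  then obtain \<alpha> \<beta> where ab: "cp \<alpha>" "cp \<beta>" "[:fps_X ^ N:] = \<alpha> * W + \<beta> * Bq"
    unfolding Jc_def by blast
  obtain R where R: "cp R" "[:0, 1:] ^ n = W + smult fps_X R"
    unfolding W_def using ypow_aux[of n a] hyp by auto
  have cW: "cp W" unfolding W_def using hyp by (intro cp_Wp) auto
  obtain Q where Q: "cp Q" "(W + smult fps_X R) ^ N = W * Q + smult (fps_X ^ N) (R ^ N)"
    using binom_aux[OF cW R(1)] by auto
  have "[:0, 1:] ^ (n * N) = W * Q + R ^ N * [:fps_X ^ N:]"
    using Q(2) R(2) by (simp add: power_mult)
  also have "\<dots> = (Q + R ^ N * \<alpha>) * W + (R ^ N * \<beta>) * Bq"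
    unfolding ab(3) by (simp add: algebra_simps)
  finally have yN: "[:0, 1:] ^ (n * N) \<in> Jc W Bq"
    unfolding Jc_def using Q(1) ab R(1) by (intro CollectI exI conjI) (auto intro!: cp_add cp_mult cp_power)
  define K where "K = N + n * N"
  have "[:fps_X ^ K:] = [:fps_X ^ (n * N):] * [:fps_X ^ N:]"
    by (simp add: K_def power_add mult.commute)
  moreover have "[:fps_X ^ (n * N):] * [:fps_X ^ N:] \<in> Jc W Bq" by (rule Jc_mult[OF xN]) auto
  ultimately have x: "[:fps_X ^ K:] \<in> Jc W Bq" by metis
  have "[:0, 1:] ^ K = [:0, 1:] ^ N * [:0, 1:] ^ (n * N)"
    by (simp add: K_def power_add)
  moreover have "[:0, 1:] ^ N * [:0, 1:] ^ (n * N) \<in> Jc W Bq" by (rule Jc_mult[OF yN]) (auto intro!: cp_power)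
  ultimately have y: "[:0, 1:] ^ K \<in> Jc W Bq" by metis
  show ?thesis using x y unfolding W_def by blast
qed

lemma low_coeffs_zero_factor:
  fixes q :: "'a::comm_ring_1 poly"
  assumes "\<And>j. j < K \<Longrightarrow> coeff q j = 0"
  shows "\<exists>R. q = [:0, 1:] ^ K * R"
  using assms
proof (induction K arbitrary: q)
  case 0 then show ?case by auto
next
  case (Suc K)
  obtain c q' where q: "q = pCons c q'" by (cases q) auto
  have "c = 0" using Suc.prems[of 0] q by simp
  have "\<And>j. j < K \<Longrightarrow> coeff q' j = 0" using Suc.prems q by (metis Suc_mono coeff_pCons_Suc)
  then obtain R where "q' = [:0, 1:] ^ K * R" using Suc.IH by blast
  moreover have "q = [:0, 1:] * q'" using q \<open>c = 0\<close> by simp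
  ultimately show ?case by (intro exI[of _ R]) (simp add: algebra_simps)
qed

lemma fps_power_low_zero:
  fixes a :: "'a::comm_ring_1 fps"
  assumes "fps_nth a 0 = 0" "k < j"
  shows "fps_nth (a ^ j) k = 0"
proof -
  have "a = fps_X * fps_shift 1 a" by (rule fps_ext) (use assms in \<open>simp add: fps_X_mult_nth\<close>)
  then have "a ^ j = fps_X ^ j * fps_shift 1 a ^ j" by (metis power_mult_distrib)
  then show ?thesis using assms by (simp add: fps_X_power_mult_nth)
qed

lemma poly_high_nth:
  fixes q :: "'a::comm_ring_1 fps poly"
  assumes a0: "fps_nth a 0 = 0" and hq: "\<And>j. j \<le> N \<Longrightarrow> coeff q j = 0" and k: "k \<le> N"
  shows "fps_nth (poly q a) k = 0"
proof -
  obtain R where "q = [:0, 1:] ^ Suc N * R" using low_coeffs_zero_factor[of "Suc N" q] hq by auto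
  then have "poly q a = a ^ Suc N * poly R a" by simp
  also have "fps_nth \<dots> k = 0"
    unfolding fps_mult_nth by (rule sum.neutral) (use k a0 in \<open>auto simp del: power_Suc simp: fps_power_low_zero\<close>)
  finally show ?thesis .
qed

lemma fps_mult_nth_cong:
  fixes A B A' B' :: "'a::comm_semiring_1 fps"
  assumes "\<And>k. k \<le> n \<Longrightarrow> fps_nth A k = fps_nth A' k" "\<And>k. k \<le> n \<Longrightarrow> fps_nth B k = fps_nth B' k"
  shows "fps_nth (A * B) n = fps_nth (A' * B') n"
  unfolding fps_mult_nth using assms by (intro sum.cong) auto

definition Tr :: "nat \<Rightarrow> 'a::zero fps fps \<Rightarrow> 'a fps poly" where
  "Tr N F = Abs_poly (\<lambda>j. if j \<le> N then fps_nth F j else 0)"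

lemma coeff_Tr: "coeff (Tr N F) j = (if j \<le> N then fps_nth F j else 0)"
proof -
  have "\<forall>\<^sub>\<infinity> j. (if j \<le> N then fps_nth F j else 0) = 0"
    unfolding MOST_nat by (intro exI[of _ N]) auto
  then show ?thesis unfolding Tr_def by (simp add: Abs_poly_inverse)
qed

definition ev :: "'a::comm_ring_1 fps fps \<Rightarrow> 'a fps \<Rightarrow> 'a fps" where
  "ev F a = Abs_fps (\<lambda>k. fps_nth (poly (Tr k F) a) k)"

lemma ev_nth:
  assumes a0: "fps_nth a 0 = 0" and "k \<le> N"
  shows "fps_nth (ev F a) k = fps_nth (poly (Tr N F) a) k"
proof -
  have "poly (Tr N F) a = poly (Tr k F) a + poly (Tr N F - Tr k F) a" by simp
  moreover have "fps_nth (poly (Tr N F - Tr k F) a) k = 0"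
    by (rule poly_high_nth[OF a0, of k]) (use assms(2) in \<open>auto simp: coeff_Tr\<close>)
  ultimately show ?thesis unfolding ev_def by simp
qed

lemma ev_mult:
  assumes a0: "fps_nth a 0 = 0"
  shows "ev (F * G) a = ev F a * ev G a"
proof (rule fps_ext)
  fix n
  have e1: "fps_nth (ev F a * ev G a) n = fps_nth (poly (Tr n F) a * poly (Tr n G) a) n"
    by (rule fps_mult_nth_cong) (auto simp: ev_nth[OF a0])
  have e2: "poly (Tr n F) a * poly (Tr n G) a = poly (Tr n (F * G)) a + poly (Tr n F * Tr n G - Tr n (F * G)) a"
    by simp
  have e3: "fps_nth (poly (Tr n F * Tr n G - Tr n (F * G)) a) n = 0"
  proof (rule poly_high_nth[OF a0, of n])
    fix j assume j: "j \<le> n"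
    have "coeff (Tr n F * Tr n G) j = (\<Sum>i\<le>j. coeff (Tr n F) i * coeff (Tr n G) (j - i))"
      by (simp add: coeff_mult)
    also have "\<dots> = (\<Sum>i\<le>j. fps_nth F i * fps_nth G (j - i))"
      by (rule sum.cong) (use j in \<open>auto simp: coeff_Tr\<close>)
    also have "\<dots> = coeff (Tr n (F * G)) j" using j by (simp add: coeff_Tr fps_mult_nth atLeast0AtMost)
    finally show "coeff (Tr n F * Tr n G - Tr n (F * G)) j = 0" by simp
  qed simp
  show "fps_nth (ev (F * G) a) n = fps_nth (ev F a * ev G a) n"
  proof -
    have "fps_nth (ev (F * G) a) n = fps_nth (poly (Tr n (F * G)) a) n" by (simp add: ev_def)
    also have "\<dots> = fps_nth (poly (Tr n (F * G)) a) n + fps_nth (poly (Tr n F * Tr n G - Tr n (F * G)) a) n"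
      using e3 by simp
    also have "\<dots> = fps_nth (poly (Tr n (F * G)) a + poly (Tr n F * Tr n G - Tr n (F * G)) a) n"
      by (simp only: fps_add_nth)
    also have "\<dots> = fps_nth (poly (Tr n F) a * poly (Tr n G) a) n"
      by (simp only: e2)
    finally show ?thesis using e1 by simp
  qed
qed

lemma Tr_add: "Tr N (F + G) = Tr N F + Tr N G"
  by (rule poly_eqI) (simp add: coeff_Tr)
lemma Tr_diff: "Tr N (F - G) = Tr N F - Tr N (G :: 'a::comm_ring_1 fps fps)"
  by (rule poly_eqI) (simp add: coeff_Tr)

lemma ev_add: "ev (F + G) a = ev F a + ev G a"
  unfolding ev_def by (rule fps_ext) (simp add: Tr_add)
lemma ev_diff: "ev (F - G) a = ev F a - ev G a"
  unfolding ev_def by (rule fps_ext) (simp add: Tr_diff)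

lemma ev_of_poly:
  assumes a0: "fps_nth a 0 = 0"
  shows "ev (fps_of_poly p) a = poly p a"
proof (rule fps_ext)
  fix n
  define N where "N = max n (degree p)"
  have "Tr N (fps_of_poly p) = p"
    by (rule poly_eqI) (auto simp: coeff_Tr N_def coeff_eq_0)
  then show "fps_nth (ev (fps_of_poly p) a) n = fps_nth (poly p a) n"
    using ev_nth[OF a0, of n N] by (simp add: N_def)
qed

definition geo :: "'a::comm_ring_1 fps \<Rightarrow> 'a fps" where
  "geo E = Abs_fps (\<lambda>n. fps_nth (\<Sum>l\<le>n. E ^ l) n)"

lemma geo_nth:
  assumes "fps_nth E 0 = 0" "k \<le> n"
  shows "fps_nth (geo E) k = fps_nth (\<Sum>l\<le>n. E ^ l) k"
proof -
  have "fps_nth (\<Sum>l\<le>n. E ^ l) k = fps_nth (\<Sum>l\<le>k. E ^ l) k + fps_nth (\<Sum>l\<in>{k<..n}. E ^ l) k"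
  proof -
    have "{..n} = {..k} \<union> {k<..n}" using assms(2) by auto
    then have "(\<Sum>l\<le>n. E ^ l) = (\<Sum>l\<le>k. E ^ l) + (\<Sum>l\<in>{k<..n}. E ^ l)"
      by (simp add: sum.union_disjoint ivl_disj_int)
    then show ?thesis by simp
  qed
  moreover have "fps_nth (\<Sum>l\<in>{k<..n}. E ^ l) k = 0"
    unfolding fps_sum_nth by (rule sum.neutral) (use assms(1) in \<open>auto simp: fps_power_low_zero\<close>)
  ultimately show ?thesis by (simp add: geo_def)
qed

lemma geo_inv:
  assumes "fps_nth E 0 = 0"
  shows "(1 - E) * geo E = 1"
proof (rule fps_ext)
  fix n
  have "fps_nth ((1 - E) * geo E) n = fps_nth ((1 - E) * (\<Sum>l\<le>n. E ^ l)) n"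
    by (rule fps_mult_nth_cong) (auto simp: geo_nth[OF assms])
  also have "(1 - E) * (\<Sum>l\<le>n. E ^ l) = 1 - E ^ Suc n" by (rule sum_gp_basic)
  also have "fps_nth (1 - E ^ Suc n) n = fps_nth (1::'a fps) n"
    using fps_power_low_zero[OF assms, of n "Suc n"] by simp
  finally show "fps_nth ((1 - E) * geo E) n = fps_nth 1 n" .
qed

definition nrm2 :: "complex fps fps \<Rightarrow> real fps fps" where
  "nrm2 f = Abs_fps (\<lambda>j. Abs_fps (\<lambda>i. norm (fps_nth (fps_nth f j) i)))"

lemma nrm2_nth [simp]: "fps_nth (fps_nth (nrm2 f) j) i = norm (fps_nth (fps_nth f j) i)"
  by (simp add: nrm2_def)

definition tot :: "complex fps fps \<Rightarrow> real fps" where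
  "tot f = ev (nrm2 f) fps_X"

lemma ev_X_nth: "fps_nth (ev F fps_X) n = (\<Sum>j\<le>n. fps_nth (fps_nth F j) (n - j))"
proof -
  have "fps_nth (ev F fps_X) n = fps_nth (poly (Tr n F) fps_X) n" by (rule ev_nth) auto
  also have "poly (Tr n F) fps_X = (\<Sum>j\<le>n. fps_nth F j * fps_X ^ j)"
  proof -
    have "degree (Tr n F) \<le> n" by (rule degree_le) (auto simp: coeff_Tr)
    then have "poly (Tr n F) fps_X = (\<Sum>j\<le>n. coeff (Tr n F) j * fps_X ^ j)"
      by (simp add: poly_altdef) (rule sum.mono_neutral_left, auto simp: coeff_eq_0)
    also have "\<dots> = (\<Sum>j\<le>n. fps_nth F j * fps_X ^ j)" by (rule sum.cong) (auto simp: coeff_Tr)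
    finally show ?thesis .
  qed
  also have "fps_nth \<dots> n = (\<Sum>j\<le>n. fps_nth (fps_nth F j) (n - j))"
    unfolding fps_sum_nth by (rule sum.cong) (auto simp: fps_X_power_mult_right_nth)
  finally show ?thesis .
qed

lemma tot_nth: "fps_nth (tot f) n = (\<Sum>j\<le>n. norm (fps_nth (fps_nth f j) (n - j)))"
  unfolding tot_def ev_X_nth by simp

lemma tot_nonneg: "fps_nth (tot f) n \<ge> 0"
  unfolding tot_nth by (intro sum_nonneg) auto

lemma entry_le_tot: "norm (fps_nth (fps_nth f j) i) \<le> fps_nth (tot f) (i + j)"
proof -
  have "norm (fps_nth (fps_nth f j) i) = (\<Sum>j'\<in>{j}. norm (fps_nth (fps_nth f j') (i + j - j')))" by simp
  also have "\<dots> \<le> (\<Sum>j'\<le>i + j. norm (fps_nth (fps_nth f j') (i + j - j')))"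
    by (rule sum_mono2) auto
  finally show ?thesis unfolding tot_nth .
qed

lemma conv_ps2_tot: "conv_ps2 f \<longleftrightarrow> bnd (tot f)"
proof
  assume "conv_ps2 f"
  then obtain r K where r: "r > 0" and K: "\<And>i j. norm (fps_nth (fps_nth f j) i) * r ^ (i + j) \<le> K"
    unfolding conv_ps2_def by blast
  have K0: "K \<ge> 0" using K[of 0 0] by (meson norm_ge_zero order_trans zero_le_mult_iff zero_le_power r less_imp_le)
  show "bnd (tot f)" unfolding bnd_def
  proof (rule exI[of _ "r/2"], intro conjI exI[of _ K] allI)
    fix n
    have "norm (fps_nth (tot f) n) * (r/2) ^ n = (\<Sum>j\<le>n. norm (fps_nth (fps_nth f j) (n - j)) * r ^ n) / 2 ^ n"
      using tot_nonneg[of f n] by (simp add: tot_nth sum_distrib_right power_divide)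
    also have "\<dots> \<le> (\<Sum>j\<le>n. K) / 2 ^ n"
    proof (intro divide_right_mono sum_mono)
      fix j assume "j \<in> {..n}"
      then have "n - j + j = n" by auto
      then show "norm (fps_nth (fps_nth f j) (n - j)) * r ^ n \<le> K" using K[of j "n - j"] by simp
    qed simp
    also have "\<dots> = (real n + 1) * K / 2 ^ n" by simp
    also have "\<dots> \<le> K"
    proof -
      have "real n + 1 \<le> 2 ^ n" 
        by (induction n) auto
      then have "(real n + 1) * K \<le> 2 ^ n * K" using K0 by (intro mult_right_mono) auto
      then show ?thesis by (simp add: field_simps)
    qed
    finally show "norm (fps_nth (tot f) n) * (r / 2) ^ n \<le> K" .
  qed (use r in auto)
next
  assume "bnd (tot f)"
  then obtain r K where r: "r > 0" and K: "\<And>n. norm (fps_nth (tot f) n) * r ^ n \<le> K"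
    unfolding bnd_def by blast
  show "conv_ps2 f" unfolding conv_ps2_def
  proof (rule exI[of _ r], intro conjI exI[of _ K] allI)
    fix i j
    have "norm (fps_nth (fps_nth f j) i) * r ^ (i + j) \<le> norm (fps_nth (tot f) (i + j)) * r ^ (i + j)"
      using entry_le_tot[of f j i] r by (intro mult_right_mono) auto
    also have "\<dots> \<le> K" by (rule K)
    finally show "norm (fps_nth (fps_nth f j) i) * r ^ (i + j) \<le> K" .
  qed (use r in auto)
qed


lemma nrm2_mult_le: "fps_nth (fps_nth (nrm2 (f * g)) j) i \<le> fps_nth (fps_nth (nrm2 f * nrm2 g) j) i"
proof -
  have "norm (fps_nth (fps_nth (f * g) j) i)
      = norm (\<Sum>l = 0..j. \<Sum>i1 = 0..i. fps_nth (fps_nth f l) i1 * fps_nth (fps_nth g (j - l)) (i - i1))"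
    by (simp add: fps_mult_nth fps_sum_nth)
  also have "\<dots> \<le> (\<Sum>l = 0..j. \<Sum>i1 = 0..i. norm (fps_nth (fps_nth f l) i1) * norm (fps_nth (fps_nth g (j - l)) (i - i1)))"
    by (rule order_trans[OF norm_sum sum_mono], rule order_trans[OF norm_sum sum_mono]) (simp add: norm_mult)
  also have "\<dots> = fps_nth (fps_nth (nrm2 f * nrm2 g) j) i"
    by (simp add: fps_mult_nth fps_sum_nth)
  finally show ?thesis by simp
qed

lemma ev_X_mono:
  assumes "\<And>j i. fps_nth (fps_nth F j) i \<le> fps_nth (fps_nth G j) i"
  shows "fps_nth (ev F fps_X) n \<le> fps_nth (ev (G :: real fps fps) fps_X) n"
  unfolding ev_X_nth by (intro sum_mono assms)

lemma tot_mult_le: "fps_nth (tot (f * g)) n \<le> fps_nth (tot f * tot g) n"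
proof -
  have "fps_nth (tot (f * g)) n \<le> fps_nth (ev (nrm2 f * nrm2 g) fps_X) n"
    unfolding tot_def by (rule ev_X_mono) (rule nrm2_mult_le)
  also have "ev (nrm2 f * nrm2 g) fps_X = tot f * tot g"
    unfolding tot_def by (rule ev_mult) simp
  finally show ?thesis .
qed

lemma bnd_mono:
  fixes g h :: "real fps"
  assumes "\<And>n. 0 \<le> fps_nth g n" "\<And>n. fps_nth g n \<le> fps_nth h n" "bnd h"
  shows "bnd g"
proof -
  obtain r K where r: "r > 0" and K: "\<And>n. norm (fps_nth h n) * r ^ n \<le> K"
    using assms(3) unfolding bnd_def by blast
  show ?thesis unfolding bnd_def
  proof (rule exI[of _ r], intro conjI exI[of _ K] allI)
    fix n
    have "norm (fps_nth g n) * r ^ n \<le> norm (fps_nth h n) * r ^ n"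
      using assms(1,2)[of n] r by (intro mult_right_mono) auto
    then show "norm (fps_nth g n) * r ^ n \<le> K" using K[of n] by simp
  qed (use r in auto)
qed

lemma bnd_real_mult: "bnd (a :: real fps) \<Longrightarrow> bnd b \<Longrightarrow> bnd (a * b)"
  unfolding bnd_iff_radius using fps_conv_radius_mult[of a b] by (auto simp: min_def split: if_splits)
lemma bnd_real_add: "bnd (a :: real fps) \<Longrightarrow> bnd b \<Longrightarrow> bnd (a + b)"
  unfolding bnd_iff_radius using fps_conv_radius_add[of a b] by (auto simp: min_def split: if_splits)

lemma conv_ps2_mult [intro]: "conv_ps2 f \<Longrightarrow> conv_ps2 g \<Longrightarrow> conv_ps2 (f * g)"
  unfolding conv_ps2_tot
  by (rule bnd_mono[OF tot_nonneg tot_mult_le bnd_real_mult])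

lemma tot_add_le: "fps_nth (tot (f + g)) n \<le> fps_nth (tot f + tot g) n"
  unfolding tot_nth fps_add_nth sum.distrib[symmetric]
  by (intro sum_mono) (simp add: norm_triangle_ineq)

lemma conv_ps2_add [intro]: "conv_ps2 f \<Longrightarrow> conv_ps2 g \<Longrightarrow> conv_ps2 (f + g)"
  unfolding conv_ps2_tot
  by (rule bnd_mono[OF tot_nonneg tot_add_le bnd_real_add])

lemma conv_ps2_uminus [intro]: "conv_ps2 f \<Longrightarrow> conv_ps2 (- f)"
  unfolding conv_ps2_def by simp

lemma conv_ps2_diff [intro]: "conv_ps2 f \<Longrightarrow> conv_ps2 g \<Longrightarrow> conv_ps2 (f - g)"
  using conv_ps2_add[of f "- g"] by auto

lemma conv_ps2_const [intro]:
  assumes "conv_ps1 a" shows "conv_ps2 (fps_const a)"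
proof -
  obtain r K where r: "r > 0" and K: "\<And>i. norm (fps_nth a i) * r ^ i \<le> K"
    using assms unfolding conv_ps1_def by blast
  have K0: "0 \<le> K" using K[of 0] by (metis norm_ge_zero order_trans mult.right_neutral power_0)
  show ?thesis unfolding conv_ps2_def
    by (rule exI[of _ r], intro conjI exI[of _ K] allI) (use r K K0 in auto)
qed

lemma conv_ps2_const2 [intro, simp]: "conv_ps2 (fps_const (fps_const c))"
  by (intro conv_ps2_const) simp

lemma conv_ps2_0 [intro, simp]: "conv_ps2 0"
  unfolding conv_ps2_def by (intro exI[of _ 1]) auto
lemma conv_ps2_1 [intro, simp]: "conv_ps2 1"
  using conv_ps2_const[of 1] by simp

lemma conv_ps2_X [intro, simp]: "conv_ps2 fps_X"
  unfolding conv_ps2_def by (rule exI[of _ 1], intro conjI exI[of _ 1] allI) auto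

lemma conv_ps2_power [intro]: "conv_ps2 f \<Longrightarrow> conv_ps2 (f ^ n)"
  by (induction n) auto
lemma conv_ps2_sum [intro]: "(\<And>i. i \<in> S \<Longrightarrow> conv_ps2 (f i)) \<Longrightarrow> conv_ps2 (\<Sum>i\<in>S. f i)"
  by (induction S rule: infinite_finite_induct) auto
lemma conv_ps2_prod [intro]: "(\<And>i. i \<in> S \<Longrightarrow> conv_ps2 (f i)) \<Longrightarrow> conv_ps2 (\<Prod>i\<in>S. f i)"
  by (induction S rule: infinite_finite_induct) auto

lemma conv_ps2_poly [intro]:
  assumes "cp p" shows "conv_ps2 (fps_of_poly p)"
proof -
  have "fps_of_poly p = (\<Sum>j\<le>degree p. fps_const (coeff p j) * fps_X ^ j)"
    by (subst poly_as_sum_of_monoms[symmetric]) (simp add: fps_of_poly_sum fps_of_poly_monom)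
  also have "conv_ps2 \<dots>" using assms unfolding cp_def by auto
  finally show ?thesis .
qed

lemma conv_ps2_nth [intro]:
  assumes "conv_ps2 f" shows "conv_ps1 (fps_nth f j)"
proof -
  obtain r K where r: "r > 0" and K: "\<And>i j. norm (fps_nth (fps_nth f j) i) * r ^ (i + j) \<le> K"
    using assms unfolding conv_ps2_def by blast
  show ?thesis unfolding conv_ps1_def
  proof (rule exI[of _ r], intro conjI exI[of _ "K / r ^ j"] allI)
    fix i
    have "norm (fps_nth (fps_nth f j) i) * r ^ i * r ^ j \<le> K" using K[of j i] by (simp add: power_add mult.assoc)
    then show "norm (fps_nth (fps_nth f j) i) * r ^ i \<le> K / r ^ j" using r by (simp add: field_simps)
  qed (use r in auto)
qed

lemma conv_ps2_shift [intro]: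
  assumes "conv_ps2 f" shows "conv_ps2 (fps_shift n f)"
proof -
  obtain r K where r: "r > 0" and K: "\<And>i j. norm (fps_nth (fps_nth f j) i) * r ^ (i + j) \<le> K"
    using assms unfolding conv_ps2_def by blast
  show ?thesis unfolding conv_ps2_def
  proof (rule exI[of _ r], intro conjI exI[of _ "K / r ^ n"] allI)
    fix i j
    have "norm (fps_nth (fps_nth f (j + n)) i) * r ^ (i + j) * r ^ n \<le> K" using K[of "j + n" i] by (simp add: power_add mult.assoc)
    then show "norm (fps_nth (fps_nth (fps_shift n f) j) i) * r ^ (i + j) \<le> K / r ^ n" using r by (simp add: field_simps)
  qed (use r in auto)
qed


lemma real_fps_mult_mono:
  fixes A B B' :: "real fps"
  assumes "\<And>k. 0 \<le> fps_nth A k" "\<And>k. fps_nth B k \<le> fps_nth B' k"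
  shows "fps_nth (A * B) n \<le> fps_nth (A * B') n"
  unfolding fps_mult_nth by (intro sum_mono mult_left_mono assms)

lemma tot_power_le: "fps_nth (tot (E ^ l)) k \<le> fps_nth (tot E ^ l) k"
proof (induction l arbitrary: k)
  case 0
  have "fps_nth (tot 1) k = fps_nth (1 :: real fps) k"
    by (cases k) (auto simp: tot_nth intro!: sum.neutral)
  then show ?case by simp
next
  case (Suc l)
  have "fps_nth (tot (E * E ^ l)) k \<le> fps_nth (tot E * tot (E ^ l)) k" by (rule tot_mult_le)
  also have "\<dots> \<le> fps_nth (tot E * tot E ^ l) k"
    by (rule real_fps_mult_mono) (use tot_nonneg Suc.IH in auto)
  finally show ?case by simp
qed

lemma bnd_geo:
  fixes T :: "real fps"
  assumes "bnd T" "fps_nth T 0 = 0"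
  shows "bnd (geo T)"
proof -
  have inv: "(1 - T) * geo T = 1" by (rule geo_inv[OF assms(2)])
  have n0: "fps_nth (1 - T) 0 \<noteq> 0" using assms(2) by simp
  have "geo T = inverse (1 - T) * ((1 - T) * geo T)"
    using n0 by (simp add: mult.assoc[symmetric] inverse_mult_eq_1)
  then have g: "geo T = inverse (1 - T)" using inv by simp
  have "fps_conv_radius (1 - T) > 0"
    using assms(1) bnd_iff_radius[of "1 - T"] bnd_iff_radius[of T] fps_conv_radius_diff[of 1 T]
    by (auto simp: min_def split: if_splits)
  then have "fps_conv_radius (inverse (1 - T)) > 0" by (rule fps_conv_radius_inverse_pos[OF n0])
  then show ?thesis unfolding g bnd_iff_radius .
qed

lemma conv_ps2_inverse:
  assumes cu: "conv_ps2 u" and u0: "fps_nth (fps_nth u 0) 0 \<noteq> 0"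
  shows "\<exists>w. conv_ps2 w \<and> u * w = 1"
proof -
  define iu where "iu = inverse (fps_nth u 0)"
  have ciu: "conv_ps1 iu" unfolding iu_def using cu u0 by auto
  define v where "v = fps_const iu * u"
  have v0: "fps_nth v 0 = 1" unfolding v_def iu_def using u0 by (simp add: inverse_mult_eq_1)
  define E where "E = 1 - v"
  have E0: "fps_nth E 0 = 0" unfolding E_def using v0 by simp
  have cE: "conv_ps2 E" unfolding E_def v_def using cu ciu by auto
  define S where "S = geo E"
  have vS: "v * S = 1" using geo_inv[OF E0] unfolding E_def S_def by simp
  define T where "T = tot E"
  have T0: "fps_nth T 0 = 0" unfolding T_def tot_nth using E0 by simp
  have bT: "bnd T" using cE unfolding T_def conv_ps2_tot .
  have le: "fps_nth (tot S) n \<le> fps_nth (geo T) n" for n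
  proof -
    have "fps_nth (tot S) n = (\<Sum>j\<le>n. norm (fps_nth (fps_nth S j) (n - j)))" by (rule tot_nth)
    also have "\<dots> \<le> (\<Sum>j\<le>n. \<Sum>l\<le>n. fps_nth (fps_nth (nrm2 (E ^ l)) j) (n - j))"
    proof (rule sum_mono)
      fix j assume j: "j \<in> {..n}"
      have "fps_nth S j = fps_nth (\<Sum>l\<le>j. E ^ l) j" unfolding S_def geo_def by simp
      then have "norm (fps_nth (fps_nth S j) (n - j)) = norm (\<Sum>l\<le>j. fps_nth (fps_nth (E ^ l) j) (n - j))"
        by (simp add: fps_sum_nth)
      also have "\<dots> \<le> (\<Sum>l\<le>j. norm (fps_nth (fps_nth (E ^ l) j) (n - j)))" by (rule norm_sum)
      also have "\<dots> \<le> (\<Sum>l\<le>n. norm (fps_nth (fps_nth (E ^ l) j) (n - j)))"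
        by (rule sum_mono2) (use j in auto)
      finally show "norm (fps_nth (fps_nth S j) (n - j)) \<le> (\<Sum>l\<le>n. fps_nth (fps_nth (nrm2 (E ^ l)) j) (n - j))"
        by simp
    qed
    also have "\<dots> = (\<Sum>l\<le>n. fps_nth (tot (E ^ l)) n)"
      by (subst sum.swap) (simp add: tot_nth)
    also have "\<dots> \<le> (\<Sum>l\<le>n. fps_nth (T ^ l) n)"
      unfolding T_def by (intro sum_mono tot_power_le)
    also have "\<dots> = fps_nth (geo T) n"
      using geo_nth[OF T0, of n n] by (simp add: fps_sum_nth)
    finally show ?thesis .
  qed
  have "bnd (tot S)" by (rule bnd_mono[OF tot_nonneg le bnd_geo[OF bT T0]])
  then have cS: "conv_ps2 S" unfolding conv_ps2_tot .
  show ?thesis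
  proof (intro exI conjI)
    show "conv_ps2 (fps_const iu * S)" using ciu cS by auto
    show "u * (fps_const iu * S) = 1" using vS unfolding v_def by (simp add: algebra_simps)
  qed
qed

abbreviation mp :: "complex poly poly \<Rightarrow> complex fps poly" where
  "mp \<equiv> map_poly fps_of_poly"

lemma mp_add: "mp (p + q) = mp p + mp q"
  by (rule poly_eqI) (simp add: coeff_map_poly fps_of_poly_add)
lemma mp_diff: "mp (p - q) = mp p - mp q"
  by (rule poly_eqI) (simp add: coeff_map_poly fps_of_poly_diff)
lemma mp_mult: "mp (p * q) = mp p * mp q"
  by (rule poly_eqI) (simp add: coeff_map_poly coeff_mult fps_of_poly_sum fps_of_poly_mult)
lemma mp_smult: "mp (smult c p) = smult (fps_of_poly c) (mp p)"
  by (rule map_poly_smult) (auto simp: fps_of_poly_mult)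
lemma mp_const: "mp [:c:] = [:fps_of_poly c:]"
  by (rule poly_eqI) (simp add: coeff_map_poly coeff_pCons split: nat.splits)

lemma common_root:
  fixes P Q :: "complex poly poly"
  assumes hP: "poly (mp P) a = 0" and hQ: "poly (mp Q) a = 0" and P0: "P \<noteq> 0"
  shows "\<exists>D. D dvd P \<and> D dvd Q \<and> \<not> is_unit D"
proof -
  define h where "h = (\<lambda>R. poly (mp R) a)"
  have hmult: "h (R * S) = h R * h S" for R S unfolding h_def by (simp add: mp_mult)
  have hadd: "h (R + S) = h R + h S" for R S unfolding h_def by (simp add: mp_add)
  have hsmult: "h (smult c R) = fps_of_poly c * h R" for c R unfolding h_def by (simp add: mp_smult)
  define Z where "Z = {R. h R = 0 \<and> R \<noteq> 0}"
  have PZ: "P \<in> Z" using hP P0 unfolding Z_def h_def by auto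
  define d where "d = (LEAST d. \<exists>R\<in>Z. degree R = d)"
  obtain \<pi> where \<pi>Z: "\<pi> \<in> Z" and d\<pi>: "degree \<pi> = d"
    using LeastI_ex[of "\<lambda>d. \<exists>R\<in>Z. degree R = d"] PZ unfolding d_def by blast
  have dmin: "\<And>R. R \<in> Z \<Longrightarrow> d \<le> degree R" unfolding d_def by (auto intro: Least_le)
  have \<pi>0: "\<pi> \<noteq> 0" and h\<pi>: "h \<pi> = 0" using \<pi>Z Z_def by auto
  have dpos: "d > 0"
  proof (rule ccontr)
    assume "\<not> d > 0"
    then have "degree \<pi> = 0" using d\<pi> by simp
    then obtain c where c: "\<pi> = [:c:]" by (metis degree_0_id)
    then have "c \<noteq> 0" using \<pi>0 by auto
    moreover have "h \<pi> = fps_of_poly c" unfolding c h_def by (simp add: mp_const)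
    ultimately show False using h\<pi> by simp
  qed
  have divides: "\<exists>k. \<pi> dvd smult (lead_coeff \<pi> ^ k) R" if hR: "h R = 0" for R
  proof -
    obtain q r where qr: "pseudo_divmod R \<pi> = (q, r)" by (cases "pseudo_divmod R \<pi>") auto
    define k where "k = Suc (degree R) - degree \<pi>"
    have eq: "smult (lead_coeff \<pi> ^ k) R = \<pi> * q + r" using pseudo_divmod(1)[OF \<pi>0 qr] k_def by simp
    have rdeg: "r = 0 \<or> degree r < degree \<pi>" using pseudo_divmod(2)[OF \<pi>0 qr] .
    have "h (smult (lead_coeff \<pi> ^ k) R) = h (\<pi> * q) + h r" using eq hadd by simp
    then have "h r = 0" using hR h\<pi> by (simp add: hsmult hmult)
    have "r = 0"
    proof (rule ccontr)
      assume "r \<noteq> 0"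
      then have "r \<in> Z" using \<open>h r = 0\<close> Z_def by auto
      then have "d \<le> degree r" by (rule dmin)
      then show False using rdeg \<open>r \<noteq> 0\<close> d\<pi> by simp
    qed
    then show ?thesis using eq by (intro exI[of _ k]) (auto intro: dvdI)
  qed
  define \<pi>' where "\<pi>' = primitive_part \<pi>"
  have \<pi>dec: "\<pi> = smult (content \<pi>) \<pi>'" unfolding \<pi>'_def by simp
  have c0: "content \<pi> \<noteq> 0" using \<pi>0 by simp
  have h\<pi>': "h \<pi>' = 0"
  proof -
    have "fps_of_poly (content \<pi>) * h \<pi>' = 0" using h\<pi> \<pi>dec hsmult by metis
    then show ?thesis using c0 by simp
  qed
  have deg': "degree \<pi>' = degree \<pi>" unfolding \<pi>'_def by simp
  have cont': "content \<pi>' = 1" unfolding \<pi>'_def using \<pi>0 by simp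
  have lc0: "lead_coeff \<pi> \<noteq> 0" using \<pi>0 by simp
  have dvd': "\<pi>' dvd R" if hR: "h R = 0" for R
  proof -
    obtain k where "\<pi> dvd smult (lead_coeff \<pi> ^ k) R" using divides[OF hR] by blast
    moreover have "\<pi>' dvd \<pi>" using \<pi>dec by (metis dvd_smult dvd_refl)
    ultimately have "\<pi>' dvd smult (lead_coeff \<pi> ^ k) R" using dvd_trans by blast
    then have "fract_poly \<pi>' dvd fract_poly (smult (lead_coeff \<pi> ^ k) R)" by (rule fract_poly_dvd)
    then have "fract_poly \<pi>' dvd smult (to_fract (lead_coeff \<pi> ^ k)) (fract_poly R)" by simp
    moreover have "to_fract (lead_coeff \<pi> ^ k) \<noteq> 0" using lc0 by simp
    ultimately have "fract_poly \<pi>' dvd fract_poly R"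
      by (metis dvd_smult_iff)
    then show ?thesis using cont' by (rule fract_poly_dvdD)
  qed
  have "\<pi>' dvd P" using dvd' hP h_def by simp
  moreover have "\<pi>' dvd Q" using dvd' hQ h_def by simp
  moreover have "\<not> is_unit \<pi>'"
  proof -
    have "is_unit \<pi>' \<Longrightarrow> degree \<pi>' \<le> degree (1 :: complex poly poly)"
      by (rule dvd_imp_degree_le) auto
    then show ?thesis using deg' d\<pi> dpos by auto
  qed
  ultimately show ?thesis by blast
qed

lemma ps_add: "ps_of_poly2 (X + Y) = ps_of_poly2 X + ps_of_poly2 Y"
  unfolding ps_of_poly2_def by (simp add: mp_add fps_of_poly_add)
lemma ps_diff: "ps_of_poly2 (X - Y) = ps_of_poly2 X - ps_of_poly2 Y"
  unfolding ps_of_poly2_def by (simp add: mp_diff fps_of_poly_diff)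
lemma ps_smult: "ps_of_poly2 (smult [:c:] X) = fps_const (fps_const c) * ps_of_poly2 X"
  unfolding ps_of_poly2_def by (simp add: mp_smult fps_of_poly_smult)

lemma fps_of_poly_lin: "fps_of_poly [:- b, 1:] = fps_X - fps_const (b :: complex fps)"
  by (rule fps_ext) (simp add: fps_of_poly_pCons coeff_pCons split: nat.splits)

lemma fps_Wp: "fps_of_poly (Wp a k n) = (\<Prod>j\<in>{Suc k..n}. fps_X - fps_const (a j))"
  unfolding Wp_def by (simp add: fps_of_poly_prod fps_of_poly_lin)

lemma Wp_split: "k \<le> n \<Longrightarrow> Wp a 0 n = Wp a 0 k * Wp a k n"
proof -
  assume "k \<le> n"
  then have "{Suc 0..n} = {Suc 0..k} \<union> {Suc k..n}" by auto
  then show ?thesis unfolding Wp_def by (simp add: prod.union_disjoint)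
qed

lemma poly_Wp_root: "j \<in> {Suc k..n} \<Longrightarrow> poly (Wp a k n) (a j) = 0"
  unfolding Wp_def poly_prod by (rule prod_zero) auto

lemma Tr_decomp: "f = fps_of_poly (Tr N f) + fps_X ^ Suc N * fps_shift (Suc N) (f :: complex fps fps)"
  by (rule fps_ext) (simp add: coeff_Tr fps_X_power_mult_nth del: power_Suc)

lemma cp_Tr: "conv_ps2 f \<Longrightarrow> cp (Tr N f)"
  unfolding cp_def coeff_Tr by auto

lemma low_zero_from_fps:
  assumes "fps_of_poly q = fps_X ^ K * S" "j < K"
  shows "coeff q j = 0"
proof -
  have "fps_nth (fps_of_poly q) j = fps_nth (fps_X ^ K * S) j" using assms(1) by simp
  then show ?thesis using assms(2) by (simp add: fps_X_power_mult_nth)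
qed

lemma fps_comb: "fps_of_poly (comb c m a n)
   = (\<Sum>(k, i)\<in>idx m n. fps_const (fps_const (c (k, i))) * (fps_const (fps_X ^ i) * fps_of_poly (Wp a k n)))"
  unfolding comb_def fps_of_poly_sum
proof (rule sum.cong)
  fix x :: "nat \<times> nat"
  obtain k i where x: "x = (k, i)" by (cases x)
  have "fps_of_poly (smult (fps_const (c (k, i)) * fps_X ^ i) (Wp a k n))
     = fps_const (fps_const (c (k, i)) * fps_X ^ i) * fps_of_poly (Wp a k n)"
    by (rule fps_of_poly_smult)
  also have "\<dots> = fps_const (fps_const (c (k, i))) * (fps_const (fps_X ^ i) * fps_of_poly (Wp a k n))"
    by (simp only: fps_const_mult[symmetric] mult.assoc)
  finally show "fps_of_poly (case x of (k, i) \<Rightarrow> smult (fps_const (c (k, i)) * fps_X ^ i) (Wp a k n)) =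
    (case x of (k, i) \<Rightarrow> fps_const (fps_const (c (k, i))) * (fps_const (fps_X ^ i) * fps_of_poly (Wp a k n)))"
    unfolding x by simp
qed simp

lemma coeff2_smult: "coeff (coeff (smult [:c:] X) j) i = c * coeff (coeff X j) i"
  by simp

lemma poly2_eqI: "(\<And>j i. coeff (coeff X j) i = coeff (coeff Y j) i) \<Longrightarrow> X = (Y :: complex poly poly)"
  by (intro poly_eqI) auto

lemma AB_identities:
  fixes P Pb A B :: "complex poly poly" and t :: complex
  assumes A_def: "A = smult [:1/2:] (P + Pb)"
    and B_def: "B = smult [:1/(2*\<i>):] (P - Pb)"
  shows "P = (A + smult [:t:] B) + smult [:\<i> - t:] B"
    and "Pb = (A + smult [:t:] B) - smult [:\<i> + t:] B"
    and "A + smult [:t:] B = smult [:1/2 + t/(2*\<i>):] P + smult [:1/2 - t/(2*\<i>):] Pb"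
    and "B = smult [:1/(2*\<i>):] P - smult [:1/(2*\<i>):] Pb"
    and "A = P - smult [:\<i>:] B"
    and "A = Pb + smult [:\<i>:] B"
  unfolding A_def B_def
  by (rule poly2_eqI, simp add: field_simps)+

lemma ideal_from_GB:
  fixes P Pb G B :: "complex poly poly" and c1 c2 d :: complex
  assumes "G = smult [:c1:] P + smult [:c2:] Pb" "B = smult [:d:] P - smult [:d:] Pb"
    and "conv_ps2 h1" "conv_ps2 h2"
  shows "h1 * ps_of_poly2 G + h2 * ps_of_poly2 B \<in> ps_ideal2 (ps_of_poly2 P) (ps_of_poly2 Pb)"
proof -
  have "h1 * ps_of_poly2 G + h2 * ps_of_poly2 B
      = (h1 * fps_const (fps_const c1) + h2 * fps_const (fps_const d)) * ps_of_poly2 P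
        + (h1 * fps_const (fps_const c2) - h2 * fps_const (fps_const d)) * ps_of_poly2 Pb"
    unfolding assms(1,2) ps_add ps_diff ps_smult by (simp add: algebra_simps)
  then show ?thesis unfolding ps_ideal2_def using assms(3,4)
    by (intro CollectI exI[of _ "h1 * fps_const (fps_const c1) + h2 * fps_const (fps_const d)"]
          exI[of _ "h1 * fps_const (fps_const c2) - h2 * fps_const (fps_const d)"]) auto
qed

lemma ideal_to_GB:
  fixes P Pb G B :: "complex poly poly" and e1 e2 :: complex
  assumes "P = G + smult [:e1:] B" "Pb = G - smult [:e2:] B"
    and "x \<in> ps_ideal2 (ps_of_poly2 P) (ps_of_poly2 Pb)"
  shows "\<exists>h1 h2. conv_ps2 h1 \<and> conv_ps2 h2 \<and> x = h1 * ps_of_poly2 G + h2 * ps_of_poly2 B"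
proof -
  obtain k1 k2 where k: "conv_ps2 k1" "conv_ps2 k2" "x = k1 * ps_of_poly2 P + k2 * ps_of_poly2 Pb"
    using assms(3) unfolding ps_ideal2_def by blast
  have "x = (k1 + k2) * ps_of_poly2 G + (k1 * fps_const (fps_const e1) - k2 * fps_const (fps_const e2)) * ps_of_poly2 B"
    unfolding k(3) assms(1,2) ps_add ps_diff ps_smult by (simp add: algebra_simps)
  then show ?thesis using k(1,2) by (intro exI conjI) auto
qed

lemma core:
  fixes Gp B :: "complex poly poly" and M :: nat
    and a :: "nat \<Rightarrow> complex fps" and u :: "complex fps fps"
    and m :: "nat \<Rightarrow> nat" and F :: "nat \<Rightarrow> complex fps fps"
  assumes ca: "\<forall>j\<in>{1..M}. conv_ps1 (a j) \<and> fps_nth (a j) 0 = 0"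
    and Bnz: "\<forall>j\<in>{1..M}. poly (mp B) (a j) \<noteq> 0"
    and md: "\<forall>j. m j = subdegree (poly (mp B) (a j))"
    and cu: "conv_ps2 u" and u0: "fps_nth (fps_nth u 0) 0 \<noteq> 0"
    and factor: "ps_of_poly2 Gp = u * (\<Prod>j=1..M. fps_X - fps_const (a j))"
    and F_def: "\<forall>k\<in>{1..M}. F k * (\<Prod>j=1..k. fps_X - fps_const (a j)) = ps_of_poly2 Gp"
  defines "IGB \<equiv> {h1 * ps_of_poly2 Gp + h2 * ps_of_poly2 B | h1 h2. conv_ps2 h1 \<and> conv_ps2 h2}"
    and "v \<equiv> (\<lambda>(k, i). fps_const (fps_X ^ i) * F k)"
  shows "\<forall>s\<in>idx m M. conv_ps2 (v s)"
    and "\<And>c. (\<Sum>s\<in>idx m M. fps_const (fps_const (c s)) * v s) \<in> IGB \<Longrightarrow> \<forall>s\<in>idx m M. c s = 0"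
    and "\<And>f. conv_ps2 f \<Longrightarrow> \<exists>c. f - (\<Sum>s\<in>idx m M. fps_const (fps_const (c s)) * v s) \<in> IGB"
proof -
  define Bq where "Bq = mp B"
  have cB: "cp Bq" unfolding Bq_def by simp
  have B2: "ps_of_poly2 B = fps_of_poly Bq" unfolding Bq_def ps_of_poly2_def ..
  define W where "W = Wp a 0 M"
  have cW: "cp W" unfolding W_def using ca by (intro cp_Wp) auto
  have W2: "fps_of_poly W = (\<Prod>j=1..M. fps_X - fps_const (a j))" unfolding W_def fps_Wp by simp
  have G2: "ps_of_poly2 Gp = u * fps_of_poly W" using factor W2 by simp
  have Fk: "F k = u * fps_of_poly (Wp a k M)" if k: "k \<in> {1..M}" for k
  proof -
    have "F k * fps_of_poly (Wp a 0 k) = u * fps_of_poly (Wp a k M) * fps_of_poly (Wp a 0 k)"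
    proof -
      have "F k * fps_of_poly (Wp a 0 k) = ps_of_poly2 Gp" using F_def k by (simp add: fps_Wp)
      also have "\<dots> = u * fps_of_poly (Wp a 0 k * Wp a k M)" unfolding G2 W_def using k Wp_split[of k M a] by simp
      finally show ?thesis by (simp add: fps_of_poly_mult algebra_simps)
    qed
    moreover have "fps_of_poly (Wp a 0 k) \<noteq> 0" unfolding Wp_def by (simp add: fps_of_poly_prod)
    ultimately show ?thesis by simp
  qed
  have cv: "conv_ps2 (v s)" if hs: "s \<in> idx m M" for s
  proof -
    obtain k i where s: "s = (k, i)" "k \<in> {1..M}" using hs unfolding idx_def by (cases s) auto
    have "cp (Wp a k M)" using ca s(2) by (intro cp_Wp) auto
    then show ?thesis unfolding v_def s(1) using Fk[OF s(2)] cu by auto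
  qed
  then show "\<forall>s\<in>idx m M. conv_ps2 (v s)" by blast
  have sumv: "(\<Sum>s\<in>idx m M. fps_const (fps_const (c s)) * v s) = u * fps_of_poly (comb c m a M)" for c
  proof -
    have "(\<Sum>s\<in>idx m M. fps_const (fps_const (c s)) * v s)
        = (\<Sum>(k, i)\<in>idx m M. u * (fps_const (fps_const (c (k, i))) * (fps_const (fps_X ^ i) * fps_of_poly (Wp a k M))))"
      by (rule sum.cong) (auto simp: v_def idx_def Fk algebra_simps)
    also have "\<dots> = u * fps_of_poly (comb c m a M)"
      unfolding fps_comb sum_distrib_left by (simp add: case_prod_unfold)
    finally show ?thesis .
  qed
  obtain w where cw: "conv_ps2 w" and uw: "u * w = 1" using conv_ps2_inverse[OF cu u0] by blast
  have hypJ: "\<forall>j\<in>{1..M}. conv_ps1 (a j) \<and> fps_nth (a j) 0 = 0 \<and> poly Bq (a j) \<noteq> 0"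
    using ca Bnz unfolding Bq_def by auto
  have md': "\<forall>j. m j = subdegree (poly Bq (a j))" using md unfolding Bq_def .
  obtain K where yK0: "[:0, 1:] ^ K \<in> Jc W Bq" using XY_in_J[OF hypJ md' cB] unfolding W_def by blast
  have yK: "[:0, 1:] ^ Suc K \<in> Jc W Bq" using Jc_mult[OF yK0, of "[:0, 1:]"] by simp
  then obtain \<alpha>' \<beta>' where ab': "cp \<alpha>'" "cp \<beta>'" "[:0, 1:] ^ Suc K = \<alpha>' * W + \<beta>' * Bq"
    unfolding Jc_def by blast
  have Y: "fps_of_poly ([:0, 1:] ^ Suc K) = (fps_X ^ Suc K :: complex fps fps)"
    by (simp add: fps_of_poly_power fps_of_poly_pCons)
  show "\<forall>s\<in>idx m M. c s = 0" if hc: "(\<Sum>s\<in>idx m M. fps_const (fps_const (c s)) * v s) \<in> IGB" for c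
  proof -
    obtain h1 h2 where h: "conv_ps2 h1" "conv_ps2 h2"
        "u * fps_of_poly (comb c m a M) = h1 * ps_of_poly2 Gp + h2 * ps_of_poly2 B"
      using hc unfolding IGB_def sumv by blast
    define H2 where "H2 = w * h2"
    have eq: "fps_of_poly (comb c m a M) = h1 * fps_of_poly W + H2 * fps_of_poly Bq"
    proof -
      have wu: "w * (u * C) = C" for C by (metis mult.assoc mult.commute mult_1 uw)
      have "fps_of_poly (comb c m a M) = w * (u * fps_of_poly (comb c m a M))" by (rule wu[symmetric])
      also have "\<dots> = w * (h1 * (u * fps_of_poly W) + h2 * fps_of_poly Bq)"
        using h(3) unfolding G2 B2 by simp
      also have "\<dots> = h1 * (w * (u * fps_of_poly W)) + (w * h2) * fps_of_poly Bq"
        by (simp add: algebra_simps)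
      also have "\<dots> = h1 * fps_of_poly W + H2 * fps_of_poly Bq" unfolding wu H2_def ..
      finally show ?thesis .
    qed
    define T1 where "T1 = Tr K h1"
    define T2 where "T2 = Tr K H2"
    define t1 where "t1 = fps_shift (Suc K) h1"
    define t2 where "t2 = fps_shift (Suc K) H2"
    have d1: "h1 = fps_of_poly T1 + fps_X ^ Suc K * t1" unfolding T1_def t1_def by (rule Tr_decomp)
    have d2: "H2 = fps_of_poly T2 + fps_X ^ Suc K * t2" unfolding T2_def t2_def by (rule Tr_decomp)
    define q where "q = comb c m a M - T1 * W - T2 * Bq"
    have "fps_of_poly q = fps_X ^ Suc K * (t1 * fps_of_poly W + t2 * fps_of_poly Bq)"
    proof -
      have "fps_of_poly q = fps_of_poly (comb c m a M) - fps_of_poly T1 * fps_of_poly W - fps_of_poly T2 * fps_of_poly Bq"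
        unfolding q_def by (simp add: fps_of_poly_diff fps_of_poly_mult)
      also have "\<dots> = fps_X ^ Suc K * (t1 * fps_of_poly W + t2 * fps_of_poly Bq)"
        unfolding eq by (subst d1, subst d2) (simp add: algebra_simps)
      finally show ?thesis .
    qed
    then have "\<And>j. j < Suc K \<Longrightarrow> coeff q j = 0" by (rule low_zero_from_fps)
    then obtain R where R: "q = [:0, 1:] ^ Suc K * R" using low_coeffs_zero_factor by blast
    have ceq: "comb c m a M = (T1 + R * \<alpha>') * W + (T2 + R * \<beta>') * Bq"
    proof -
      have "comb c m a M = q + T1 * W + T2 * Bq" unfolding q_def by simp
      also have "\<dots> = (T1 + R * \<alpha>') * W + (T2 + R * \<beta>') * Bq"
        unfolding R ab'(3) by (simp add: algebra_simps)
      finally show ?thesis .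
    qed
    have "\<forall>(k, i)\<in>idx m M. c (k, i) = 0"
      by (rule indep_poly[of M Bq a m c "T1 + R * \<alpha>'" "T2 + R * \<beta>'"]) (use hypJ md' ceq W_def in auto)
    then show ?thesis by auto
  qed
  show "\<exists>c. f - (\<Sum>s\<in>idx m M. fps_const (fps_const (c s)) * v s) \<in> IGB" if cf: "conv_ps2 f" for f
  proof -
    define g where "g = w * f"
    have cg: "conv_ps2 g" unfolding g_def using cw cf by auto
    have fug: "f = u * g" unfolding g_def using uw by (simp add: algebra_simps)
    define T where "T = Tr K g"
    define t where "t = fps_shift (Suc K) g"
    have ct: "conv_ps2 t" unfolding t_def using cg by auto
    have gd: "g = fps_of_poly T + fps_X ^ Suc K * t" unfolding T_def t_def by (rule Tr_decomp)
    have cT: "cp T" unfolding T_def using cg by (rule cp_Tr)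
    obtain c \<alpha> \<beta> where cab: "cp \<alpha>" "cp \<beta>" "T = comb c m a M + \<alpha> * W + \<beta> * Bq"
      using span_poly[OF _ md' cB cT] hypJ unfolding W_def by blast
    have "f - (\<Sum>s\<in>idx m M. fps_const (fps_const (c s)) * v s)
        = (fps_of_poly \<alpha> + t * fps_of_poly \<alpha>') * ps_of_poly2 Gp
          + (u * fps_of_poly \<beta> + u * t * fps_of_poly \<beta>') * ps_of_poly2 B"
    proof -
      have "f - (\<Sum>s\<in>idx m M. fps_const (fps_const (c s)) * v s) = u * g - u * fps_of_poly (comb c m a M)"
        unfolding sumv fug ..
      also have "\<dots> = u * (fps_of_poly \<alpha> * fps_of_poly W + fps_of_poly \<beta> * fps_of_poly Bq
                        + fps_of_poly ([:0, 1:] ^ Suc K) * t)"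
        unfolding gd cab(3) Y by (simp add: fps_of_poly_add fps_of_poly_mult algebra_simps)
      also have "\<dots> = (fps_of_poly \<alpha> + t * fps_of_poly \<alpha>') * ps_of_poly2 Gp
          + (u * fps_of_poly \<beta> + u * t * fps_of_poly \<beta>') * ps_of_poly2 B"
        unfolding ab'(3) G2 B2 by (simp add: fps_of_poly_add fps_of_poly_mult algebra_simps)
      finally show ?thesis .
    qed
    moreover have "conv_ps2 (fps_of_poly \<alpha> + t * fps_of_poly \<alpha>')" using cab ab' ct by auto
    moreover have "conv_ps2 (u * fps_of_poly \<beta> + u * t * fps_of_poly \<beta>')" using cab ab' ct cu by auto
    ultimately show ?thesis unfolding IGB_def by blast
  qed
qed

lemma quot_basis_reindex:
  assumes qb: "quot_basis I S v"
  shows "\<exists>v'. quot_basis I {..<card S} v'"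
proof -
  have fS: "finite S" using qb unfolding quot_basis_def by blast
  obtain e where e: "bij_betw e {0..<card S} S" using ex_bij_betw_nat_finite[OF fS] by blast
  have e': "bij_betw e {..<card S} S" using e by (simp add: atLeast0LessThan)
  define v' where "v' = (\<lambda>i. v (e i))"
  have sumre: "(\<Sum>i<card S. fps_const (fps_const (c (e i))) * v' i) = (\<Sum>s\<in>S. fps_const (fps_const (c s)) * v s)" for c
    unfolding v'_def by (rule sum.reindex_bij_betw[OF e'])
  have "quot_basis I {..<card S} v'"
    unfolding quot_basis_def
  proof (intro conjI allI impI ballI)
    show "finite {..<card S}" by simp
  next
    fix i assume "i \<in> {..<card S}"
    then have "e i \<in> S" using e' bij_betwE by blast
    then show "conv_ps2 (v' i)" using qb unfolding quot_basis_def v'_def by blast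
  next
    fix c' i assume h: "(\<Sum>s\<in>{..<card S}. fps_const (fps_const (c' s)) * v' s) \<in> I" and i: "i \<in> {..<card S}"
    define c where "c = (\<lambda>s. c' (inv_into {..<card S} e s))"
    have cc: "c (e j) = c' j" if "j \<in> {..<card S}" for j
      unfolding c_def using that e' by (simp add: bij_betw_inv_into_left)
    have "(\<Sum>s\<in>S. fps_const (fps_const (c s)) * v s) = (\<Sum>j<card S. fps_const (fps_const (c (e j))) * v' j)"
      using sumre[of c] by simp
    also have "\<dots> = (\<Sum>j<card S. fps_const (fps_const (c' j)) * v' j)"
      by (rule sum.cong) (auto simp: cc)
    finally have "(\<Sum>s\<in>S. fps_const (fps_const (c s)) * v s) \<in> I" using h by simp
    then have "\<forall>s\<in>S. c s = 0" using qb unfolding quot_basis_def by blast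
    moreover have "e i \<in> S" using i e' bij_betwE by blast
    ultimately show "c' i = 0" using cc[OF i] by simp
  next
    fix f assume "conv_ps2 f"
    then obtain c where "f - (\<Sum>s\<in>S. fps_const (fps_const (c s)) * v s) \<in> I"
      using qb unfolding quot_basis_def by blast
    then show "\<exists>c'. f - (\<Sum>s\<in>{..<card S}. fps_const (fps_const (c' s)) * v' s) \<in> I"
      using sumre[of c] by (intro exI[of _ "\<lambda>i. c (e i)"]) simp
  qed
  then show ?thesis by blast
qed

lemma card_idx: "card (idx m M) = (\<Sum>j=1..M. m j)"
proof -
  have "idx m M = Sigma {1..M} (\<lambda>k. {..<m k})" unfolding idx_def by auto
  then show ?thesis by (simp add: card_SigmaI)
qed

theorem proposition7p1:
  fixes P A B :: "complex poly poly" and t :: real and M :: nat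
    and a :: "nat \<Rightarrow> complex fps" and u :: "complex fps fps"
    and m :: "nat \<Rightarrow> nat" and F :: "nat \<Rightarrow> complex fps fps"
  assumes nozero: "\<forall>x::real. \<forall>y. Im y > 0 \<longrightarrow> eval2 P (of_real x) y \<noteq> 0"
    and nocommon: "\<forall>Q. Q dvd P \<and> Q dvd conj_poly2 P \<longrightarrow> is_unit Q"
    and M_def: "M = order 0 (map_poly (\<lambda>c. poly c 0) P)"
    and lead_real: "coeff (map_poly (\<lambda>c. poly c 0) P) M \<in> \<real>"
    and A_def: "A = smult [:1/2:] (P + conj_poly2 P)"
    and B_def: "B = smult [:1/(2*\<i>):] (P - conj_poly2 P)"
    and branches: "\<forall>j\<in>{1..M}. real_ps1 (a j) \<and> fps_nth (a j) 0 = 0"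
    and u_unit: "conv_ps2 u" "fps_nth (fps_nth u 0) 0 \<noteq> 0"
    and factor: "ps_of_poly2 (A + smult [:complex_of_real t:] B)
                   = u * (\<Prod>j=1..M. fps_X - fps_const (a j))"
    and m_def: "\<forall>j. m j = subdegree (poly (map_poly fps_of_poly B) (a j))"
    and F_def: "\<forall>k\<in>{1..M}. F k * (\<Prod>j=1..k. fps_X - fps_const (a j))
                   = ps_of_poly2 (A + smult [:complex_of_real t:] B)"
  shows "quot_basis (ps_ideal2 (ps_of_poly2 P) (ps_of_poly2 (conj_poly2 P)))
           {(k, i). k \<in> {1..M} \<and> i < m k} (\<lambda>(k, i). fps_const (fps_X ^ i) * F k)
         \<and> (\<exists>v. quot_basis (ps_ideal2 (ps_of_poly2 P) (ps_of_poly2 (conj_poly2 P)))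
                  {..<(\<Sum>j=1..M. m j)} v)"
proof -
  define Pb where "Pb = conj_poly2 P"
  define tc where "tc = complex_of_real t"
  define Gp where "Gp = A + smult [:tc:] B"
  have Adef: "A = smult [:1/2:] (P + Pb)" using A_def Pb_def by simp
  have Bdef: "B = smult [:1/(2*\<i>):] (P - Pb)" using B_def Pb_def by simp
  have id1: "P = Gp + smult [:\<i> - tc:] B" unfolding Gp_def by (rule AB_identities(1)[OF Adef Bdef])
  have id2: "Pb = Gp - smult [:\<i> + tc:] B" unfolding Gp_def by (rule AB_identities(2)[OF Adef Bdef])
  have id3: "Gp = smult [:1/2 + tc/(2*\<i>):] P + smult [:1/2 - tc/(2*\<i>):] Pb"
    unfolding Gp_def by (rule AB_identities(3)[OF Adef Bdef])
  have id4: "B = smult [:1/(2*\<i>):] P - smult [:1/(2*\<i>):] Pb" by (rule AB_identities(4)[OF Adef Bdef])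
  have id5: "A = P - smult [:\<i>:] B" by (rule AB_identities(5)[OF Adef Bdef])
  have id6: "A = Pb + smult [:\<i>:] B" by (rule AB_identities(6)[OF Adef Bdef])
  have ca: "\<forall>j\<in>{1..M}. conv_ps1 (a j) \<and> fps_nth (a j) 0 = 0"
    using branches unfolding real_ps1_def by blast
  have P0: "P \<noteq> 0"
  proof
    assume "P = 0"
    then have "conj_poly2 P = 0" by (simp add: conj_poly2_def)
    then show False using nocommon[rule_format, of 0] \<open>P = 0\<close> by simp
  qed
  have factor': "ps_of_poly2 Gp = u * (\<Prod>j=1..M. fps_X - fps_const (a j))"
    using factor unfolding Gp_def tc_def .
  have F_def': "\<forall>k\<in>{1..M}. F k * (\<Prod>j=1..k. fps_X - fps_const (a j)) = ps_of_poly2 Gp"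
    using F_def unfolding Gp_def tc_def .
  have pm: "poly (mp (smult [:c:] X)) z = fps_const c * poly (mp X) z" for c X z
    by (simp add: mp_smult)
  have Bnz: "\<forall>j\<in>{1..M}. poly (mp B) (a j) \<noteq> 0"
  proof
    fix j assume j: "j \<in> {1..M}"
    have a0: "fps_nth (a j) 0 = 0" using ca j by auto
    have "poly (mp Gp) (a j) = ev (ps_of_poly2 Gp) (a j)"
      unfolding ps_of_poly2_def by (rule ev_of_poly[OF a0, symmetric])
    also have "\<dots> = ev u (a j) * ev (fps_of_poly (Wp a 0 M)) (a j)"
      unfolding factor' by (simp add: fps_Wp ev_mult[OF a0])
    also have "ev (fps_of_poly (Wp a 0 M)) (a j) = poly (Wp a 0 M) (a j)" by (rule ev_of_poly[OF a0])
    also have "\<dots> = 0" by (rule poly_Wp_root) (use j in auto)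
    finally have G0: "poly (mp Gp) (a j) = 0" by simp
    show "poly (mp B) (a j) \<noteq> 0"
    proof
      assume B0: "poly (mp B) (a j) = 0"
      have "poly (mp Gp) (a j) = poly (mp A) (a j) + fps_const tc * poly (mp B) (a j)"
        unfolding Gp_def by (simp only: mp_add poly_add pm)
      then have A0: "poly (mp A) (a j) = 0" using G0 B0 by simp
      have "poly (mp A) (a j) = poly (mp P) (a j) - fps_const \<i> * poly (mp B) (a j)"
        by (subst id5) (simp only: mp_diff poly_diff pm)
      then have hP: "poly (mp P) (a j) = 0" using A0 B0 by simp
      have "poly (mp A) (a j) = poly (mp Pb) (a j) + fps_const \<i> * poly (mp B) (a j)"
        by (subst id6) (simp only: mp_add poly_add pm)
      then have hPb: "poly (mp Pb) (a j) = 0" using A0 B0 by simp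
      obtain D where "D dvd P" "D dvd Pb" "\<not> is_unit D" using common_root[OF hP hPb P0] by blast
      then show False using nocommon[rule_format, of D] Pb_def by simp
    qed
  qed
  define IGB where "IGB = {h1 * ps_of_poly2 Gp + h2 * ps_of_poly2 B | h1 h2. conv_ps2 h1 \<and> conv_ps2 h2}"
  define v where "v = (\<lambda>(k::nat, i::nat). fps_const (fps_X ^ i) * F k)"
  note cr = core[OF ca Bnz m_def u_unit factor' F_def', folded IGB_def v_def]
  define I where "I = ps_ideal2 (ps_of_poly2 P) (ps_of_poly2 (conj_poly2 P))"
  have IGB_I: "x \<in> I" if hx: "x \<in> IGB" for x
  proof -
    obtain h1 h2 where h: "conv_ps2 h1" "conv_ps2 h2" "x = h1 * ps_of_poly2 Gp + h2 * ps_of_poly2 B"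
      using hx unfolding IGB_def by auto
    have "h1 * ps_of_poly2 Gp + h2 * ps_of_poly2 B \<in> ps_ideal2 (ps_of_poly2 P) (ps_of_poly2 Pb)"
      by (rule ideal_from_GB[OF id3 id4 h(1,2)])
    then show ?thesis unfolding I_def Pb_def h(3) .
  qed
  have I_IGB: "x \<in> IGB" if "x \<in> I" for x
  proof -
    have "\<exists>h1 h2. conv_ps2 h1 \<and> conv_ps2 h2 \<and> x = h1 * ps_of_poly2 Gp + h2 * ps_of_poly2 B"
      by (rule ideal_to_GB[OF id1 id2]) (use that I_def Pb_def in simp)
    then show ?thesis unfolding IGB_def by auto
  qed
  have S: "{(k, i). k \<in> {1..M} \<and> i < m k} = idx m M" unfolding idx_def ..
  have qb: "quot_basis I (idx m M) v"
    unfolding quot_basis_def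
  proof (intro conjI allI impI)
    show "finite (idx m M)" by simp
    show "\<forall>s\<in>idx m M. conv_ps2 (v s)" by (rule cr(1))
    show "\<forall>s\<in>idx m M. c s = 0" if "(\<Sum>s\<in>idx m M. fps_const (fps_const (c s)) * v s) \<in> I" for c
      by (rule cr(2)[OF I_IGB[OF that]])
    show "\<exists>c. f - (\<Sum>s\<in>idx m M. fps_const (fps_const (c s)) * v s) \<in> I" if hf: "conv_ps2 f" for f
    proof -
      obtain c where "f - (\<Sum>s\<in>idx m M. fps_const (fps_const (c s)) * v s) \<in> IGB" using cr(3)[OF hf] by blast
      then show ?thesis using IGB_I by (intro exI[of _ c]) auto
    qed
  qed
  have "\<exists>v'. quot_basis I {..<card (idx m M)} v'" by (rule quot_basis_reindex[OF qb])
  then have "\<exists>v'. quot_basis I {..<(\<Sum>j=1..M. m j)} v'" by (simp add: card_idx)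
  then have ex: "\<exists>v'. quot_basis (ps_ideal2 (ps_of_poly2 P) (ps_of_poly2 (conj_poly2 P))) {..<(\<Sum>j=1..M. m j)} v'"
    unfolding I_def .
  have qb': "quot_basis (ps_ideal2 (ps_of_poly2 P) (ps_of_poly2 (conj_poly2 P)))
           {(k, i). k \<in> {1..M} \<and> i < m k} (\<lambda>(k, i). fps_const (fps_X ^ i) * F k)"
    using qb unfolding S I_def v_def .
  show ?thesis using qb' ex by (rule conjI)
qed

end
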